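(* Let $T\in\mathcal M_n$, and let $f,g:[0,\infty)\to[0,\infty)$ be continuous with $f(t)g(t)=t$ for all $t\ge0$. Then \[\begin{bmatrix} f^2(|T|)+f^2(|T^*|) & \mathfrak RT+\mathfrak IT\\ \mathfrak RT+\mathfrak IT & g^2(|T|)+g^2(|T^*|)\end{bmatrix}\ge O,\] and consequently \[\pm(\mathfrak RT+\mathfrak IT)\le\big(f^2(|T|)+f^2(|T^*|)\big)\sharp\big(g^2(|T|)+g^2(|T^*|)\big).\] In particular, $\pm(\mathfrak RT+\mathfrak IT)\le|T|+|T^*|$.
   Context: $\mathcal M_n$ denotes the algebra of $n\times n$ complex matrices; $O$ the zero matrix. $X\ge Y$ means $X-Y$ is positive semidefinite. $|X|=(X^*X)^{1/2}$; functions of positive semidefinite matrices are defined by functional calculus. $\mathfrak RT=\frac{T+T^*}{2}$, $\mathfrak IT=\frac{T-T^*}{2i}$. For positive definite $A,B$, $A\sharp B=A^{1/2}(A^{-1/2}BA^{-1/2})^{1/2}A^{1/2}$; for positive semidefinite $A,B$, $A\sharp B=\lim_{\varepsilon\to0^+}(A+\varepsilon I)\sharp(B+\varepsilon I)$. *)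

theory Defs
  imports "HOL-Analysis.Analysis"
begin

definition adj :: "complex^'n^'m \<Rightarrow> complex^'m^'n" where
  "adj A = (\<chi> i j. cnj (A $ j $ i))"

definition cscale :: "complex \<Rightarrow> complex^'n^'m \<Rightarrow> complex^'n^'m" where
  "cscale c A = (\<chi> i j. c * A $ i $ j)"

definition rdiag :: "('n::finite \<Rightarrow> real) \<Rightarrow> complex^'n^'n" where
  "rdiag d = (\<chi> i j. if i = j then complex_of_real (d i) else 0)"

definition unitary :: "complex^'n^'n \<Rightarrow> bool" where
  "unitary U \<longleftrightarrow> adj U ** U = mat 1"

definition hermitian :: "complex^'n^'n \<Rightarrow> bool" where
  "hermitian A \<longleftrightarrow> adj A = A"

definition psd :: "complex^'n^'n \<Rightarrow> bool" where
  "psd A \<longleftrightarrow> hermitian A \<and>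
     (\<forall>x::complex^'n. 0 \<le> Re (\<Sum>i\<in>UNIV. \<Sum>j\<in>UNIV. cnj (x $ i) * A $ i $ j * x $ j))"

definition loewner_le :: "complex^'n^'n \<Rightarrow> complex^'n^'n \<Rightarrow> bool" where
  "loewner_le X Y \<longleftrightarrow> psd (Y - X)"

definition mfun :: "(real \<Rightarrow> real) \<Rightarrow> complex^'n::finite^'n \<Rightarrow> complex^'n^'n" where
  "mfun f A = (SOME B. \<exists>U d. unitary U \<and> A = U ** rdiag d ** adj U \<and>
                             B = U ** rdiag (f \<circ> d) ** adj U)"

definition mabs :: "complex^'n::finite^'n \<Rightarrow> complex^'n^'n" where
  "mabs T = mfun sqrt (adj T ** T)"

definition ReM :: "complex^'n::finite^'n \<Rightarrow> complex^'n^'n" where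
  "ReM T = cscale (1/2) (T + adj T)"

definition ImM :: "complex^'n::finite^'n \<Rightarrow> complex^'n^'n" where
  "ImM T = cscale (1/(2*\<i>)) (T - adj T)"

definition gmean_pd :: "complex^'n::finite^'n \<Rightarrow> complex^'n^'n \<Rightarrow> complex^'n^'n" where
  "gmean_pd A B = mfun sqrt A **
      mfun sqrt (mfun (\<lambda>t. 1 / sqrt t) A ** B ** mfun (\<lambda>t. 1 / sqrt t) A) ** mfun sqrt A"

definition gmean :: "complex^'n::finite^'n \<Rightarrow> complex^'n^'n \<Rightarrow> complex^'n^'n" where
  "gmean A B = Lim (at_right (0::real))
      (\<lambda>\<epsilon>. gmean_pd (A + cscale (of_real \<epsilon>) (mat 1)) (B + cscale (of_real \<epsilon>) (mat 1)))"

definition blockM :: "complex^'n^'n \<Rightarrow> complex^'n^'n \<Rightarrow> complex^'n^'n \<Rightarrow> complex^'n^'n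
    \<Rightarrow> complex^('n + 'n)^('n + 'n)" where
  "blockM A B C D = (\<chi> i j. case i of
       Inl a \<Rightarrow> (case j of Inl b \<Rightarrow> A $ a $ b | Inr b \<Rightarrow> B $ a $ b)
     | Inr a \<Rightarrow> (case j of Inl b \<Rightarrow> C $ a $ b | Inr b \<Rightarrow> D $ a $ b))"

end

theory Submission
  imports Defs
begin



definition cinner :: "complex^'n \<Rightarrow> complex^'n \<Rightarrow> complex" where
  "cinner x y = (\<Sum>i\<in>UNIV. cnj (x $ i) * y $ i)"

lemma adj_nth[simp]: "adj A $ i $ j = cnj (A $ j $ i)"
  by (simp add: adj_def)

lemma adj_adj[simp]: "adj (adj A) = A"
  by (simp add: vec_eq_iff)

lemma adj_mult: "adj (A ** B) = adj B ** adj A"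
  by (simp add: vec_eq_iff matrix_matrix_mult_def mult.commute)

lemma adj_add: "adj (A + B) = adj A + adj B"
  by (simp add: vec_eq_iff)

lemma adj_diff: "adj (A - B) = adj A - adj B"
  by (simp add: vec_eq_iff)

lemma adj_uminus: "adj (- A) = - adj A"
  by (simp add: vec_eq_iff)

lemma adj_mat1[simp]: "adj (mat 1 :: complex^'n^'n) = mat 1"
  by (simp add: vec_eq_iff mat_def)

lemma rdiag_nth[simp]: "rdiag d $ i $ j = (if i = j then complex_of_real (d i) else 0)"
  by (simp add: rdiag_def)

lemma adj_rdiag[simp]: "adj (rdiag d) = rdiag d"
  by (simp add: vec_eq_iff)

lemma cscale_nth[simp]: "cscale c A $ i $ j = c * A $ i $ j"
  by (simp add: cscale_def)

lemma adj_cscale: "adj (cscale c A) = cscale (cnj c) (adj A)"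
  by (simp add: vec_eq_iff)

lemma matrix_rdiag: "(A ** rdiag d) $ i $ j = A $ i $ j * d j"
proof -
  have "(A ** rdiag d) $ i $ j = (\<Sum>k\<in>UNIV. if k = j then A $ i $ j * d j else 0)"
    unfolding matrix_matrix_mult_def vec_lambda_beta by (rule sum.cong) auto
  also have "\<dots> = A $ i $ j * d j" by simp
  finally show ?thesis by simp
qed

lemma rdiag_matrix: "(rdiag d ** A) $ i $ j = d i * A $ i $ j"
proof -
  have "(rdiag d ** A) $ i $ j = (\<Sum>k\<in>UNIV. if k = i then d i * A $ i $ j else 0)"
    unfolding matrix_matrix_mult_def vec_lambda_beta by (rule sum.cong) auto
  also have "\<dots> = d i * A $ i $ j" by simp
  finally show ?thesis by simp
qed

lemma rdiag_mult: "rdiag a ** rdiag b = rdiag (\<lambda>i. a i * b i)"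
  unfolding vec_eq_iff matrix_rdiag by auto

lemma cinner_mv: "cinner x (A *v y) = cinner (adj A *v x) y"
  unfolding cinner_def matrix_vector_mult_def
  by (simp add: sum_distrib_left sum_distrib_right mult_ac)
     (rule sum.swap)

lemma psd_form: "(\<Sum>i\<in>UNIV. \<Sum>j\<in>UNIV. cnj (x $ i) * A $ i $ j * x $ j) = cinner x (A *v x)"
  unfolding cinner_def matrix_vector_mult_def
  by (simp add: sum_distrib_left mult_ac)




lemma cinner_add_right: "cinner x (y + z) = cinner x y + cinner x z"
  by (simp add: cinner_def sum.distrib distrib_left)
lemma cinner_add_left: "cinner (x + y) z = cinner x z + cinner y z"
  by (simp add: cinner_def sum.distrib distrib_right)
lemma cinner_diff_right: "cinner x (y - z) = cinner x y - cinner x z"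
  by (simp add: cinner_def sum_subtractf right_diff_distrib)
lemma cinner_diff_left: "cinner (x - y) z = cinner x z - cinner y z"
  by (simp add: cinner_def sum_subtractf left_diff_distrib)
lemma cinner_scale_right: "cinner x (c *s y) = c * cinner x y"
  by (simp add: cinner_def sum_distrib_left mult_ac)
lemma cinner_scale_left: "cinner (c *s x) y = cnj c * cinner x y"
  by (simp add: cinner_def sum_distrib_left mult_ac)
lemma cinner_cnj: "cnj (cinner x y) = cinner y x"
  by (simp add: cinner_def mult.commute)
lemma cinner_zero_right[simp]: "cinner x 0 = 0"
  by (simp add: cinner_def)
lemma cinner_zero_left[simp]: "cinner 0 x = 0"
  by (simp add: cinner_def)
lemma cinner_sum_right: "cinner x (\<Sum>j\<in>J. f j) = (\<Sum>j\<in>J. cinner x (f j))"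
  unfolding cinner_def by (simp add: sum_distrib_left sum_component) (rule sum.swap)
lemma cinner_sum_left: "cinner (\<Sum>j\<in>J. f j) x = (\<Sum>j\<in>J. cinner (f j) x)"
  unfolding cinner_def by (simp add: sum_distrib_right sum_component) (rule sum.swap)

lemma norm_sq_vec: "(norm (x::complex^'n))^2 = (\<Sum>i\<in>UNIV. (cmod (x $ i))^2)"
  unfolding norm_vec_def L2_set_def by (simp add: sum_nonneg)

lemma cinner_self: "cinner x x = complex_of_real ((norm x)^2)"
proof -
  have "cinner x x = (\<Sum>i\<in>UNIV. complex_of_real ((cmod (x $ i))^2))"
    unfolding cinner_def by (intro sum.cong refl) (metis complex_norm_square mult.commute)
  also have "\<dots> = complex_of_real ((norm x)^2)" by (simp add: norm_sq_vec)
  finally show ?thesis .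
qed

lemma cinner_self_eq0: "cinner x x = 0 \<longleftrightarrow> x = 0"
  by (simp add: cinner_self)

lemma Re_cinner_self: "Re (cinner x x) = (norm x)^2"
  by (simp add: cinner_self)

lemma mv_scale: "(A::complex^'n^'m) *v (c *s x) = c *s (A *v x)"
proof -
  have "(\<Sum>j\<in>UNIV. A$i$j * (c * x$j)) = c * (\<Sum>j\<in>UNIV. A$i$j * x$j)" for i
    unfolding sum_distrib_left by (rule sum.cong, rule refl, rule mult.left_commute)
  then show ?thesis unfolding vec_eq_iff matrix_vector_mult_def vector_smult_component vec_lambda_beta
    by blast
qed

lemma ofreal_smult: "complex_of_real r *s (x::complex^'n) = r *\<^sub>R x"
  by (simp add: vec_eq_iff complex_eq_iff)

lemma herm_sym: "hermitian A \<Longrightarrow> cinner x (A *v y) = cinner (A *v x) y"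
  by (simp add: hermitian_def cinner_mv)

lemma herm_real: "hermitian A \<Longrightarrow> cinner x (A *v x) = complex_of_real (Re (cinner x (A *v x)))"
proof -
  assume h: "hermitian A"
  have "cnj (cinner x (A *v x)) = cinner x (A *v x)"
    by (simp add: cinner_cnj herm_sym[OF h])
  then have "Im (cinner x (A *v x)) = 0" by (simp add: complex_eq_iff)
  then show ?thesis by (simp add: complex_eq_iff)
qed

lemma cont_nth[continuous_intros]: "continuous_on S f \<Longrightarrow> continuous_on S (\<lambda>x. f x $ i)"
  unfolding continuous_on_def by (auto intro: tendsto_vec_nth)

lemma cont_cinner[continuous_intros]: "continuous_on S f \<Longrightarrow> continuous_on S (\<lambda>x. cinner s (f x))"
  unfolding cinner_def by (intro continuous_intros)

lemma cont_qform: "continuous_on S (\<lambda>x. cinner x (A *v x))"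
  unfolding psd_form[symmetric] by (intro continuous_intros)

lemma quad_zero:
  fixes a c :: real
  assumes "\<And>t. 2*t*a + t^2*c \<le> 0"
  shows "a = 0"
proof (rule ccontr)
  assume a: "a \<noteq> 0"
  define u where "u = \<bar>c\<bar> + 1"
  have pos: "u > 0" by (simp add: u_def)
  have "a^2 > 0" using a by simp
  moreover have "2*u + c > 0" unfolding u_def by (cases "c \<ge> 0") auto
  ultimately have p1: "a^2 * (2*u + c) > 0" by simp
  have p2: "u^2 > 0" using pos by simp
  have p3: "a^2 * (2*u + c) / u^2 > 0" using p1 p2 by (rule divide_pos_pos)
  have e: "2*(a/u)*a + (a/u)^2*c = a^2 * (2*u + c) / u^2"
    using pos by (simp add: field_simps power2_eq_square)
  have "2*(a/u)*a + (a/u)^2*c \<le> 0" by (rule assms)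
  then show False using e p3 by linarith
qed

lemma qform_expand:
  "cinner (x + complex_of_real t *s w) (A *v (x + complex_of_real t *s w)) =
     cinner x (A *v x) + t * cinner x (A *v w) + t * cinner w (A *v x) + t^2 * cinner w (A *v w)"
proof -
  have "A *v (x + complex_of_real t *s w) = A *v x + complex_of_real t *s (A *v w)"
    by (simp only: matrix_vector_right_distrib mv_scale)
  then show ?thesis
    by (simp only: cinner_add_left cinner_add_right cinner_scale_left cinner_scale_right
        complex_cnj_complex_of_real power2_eq_square of_real_mult)
       (simp add: algebra_simps)
qed




lemma eig_exists:
  fixes A :: "complex^'n^'n" and S :: "(complex^'n) set"
  assumes herm: "hermitian A"
    and inv: "\<forall>s\<in>S. \<exists>l::real. A *v s = complex_of_real l *s s"
    and nz: "x0 \<noteq> 0" "\<forall>s\<in>S. cinner s x0 = 0"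
  shows "\<exists>v l. norm v = 1 \<and> (\<forall>s\<in>S. cinner s v = 0) \<and> A *v v = complex_of_real l *s v"
proof -
  define W where "W = {x. \<forall>s\<in>S. cinner s x = 0}"
  have Wadd: "x + y \<in> W" if "x \<in> W" "y \<in> W" for x y
    using that by (simp add: W_def cinner_add_right)
  have Wdiff: "x - y \<in> W" if "x \<in> W" "y \<in> W" for x y
    using that by (simp add: W_def cinner_diff_right)
  have Wscale: "c *s x \<in> W" if "x \<in> W" for x c
    using that by (simp add: W_def cinner_scale_right)
  have WA: "A *v x \<in> W" if "x \<in> W" for x
  proof -
    { fix s assume s: "s \<in> S"
      then obtain l where l: "A *v s = complex_of_real l *s s" using inv by blast
      have "cinner s (A *v x) = cinner (A *v s) x" by (rule herm_sym[OF herm])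
      also have "\<dots> = 0" using that s by (simp add: l cinner_scale_left W_def)
      finally have "cinner s (A *v x) = 0" . }
    then show ?thesis by (simp add: W_def)
  qed
  have clW: "closed W"
  proof -
    have "W = (\<Inter>s\<in>S. {x. cinner s x = 0})" by (auto simp: W_def)
    moreover have "closed {x::complex^'n. cinner s x = 0}" for s
      by (rule closed_Collect_eq) (intro continuous_intros)+
    ultimately show ?thesis by auto
  qed
  define K where "K = W \<inter> sphere 0 1"
  have cK: "compact K" unfolding K_def using clW by (metis Int_commute compact_Int_closed compact_sphere)
  have x0W: "x0 \<in> W" using nz by (simp add: W_def)
  have "(1 / norm x0) *\<^sub>R x0 \<in> W"
    using Wscale[OF x0W, of "complex_of_real (1 / norm x0)"] unfolding ofreal_smult .
  then have "(1 / norm x0) *\<^sub>R x0 \<in> K"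
    using nz by (simp add: K_def)
  then have Kne: "K \<noteq> {}" by blast
  define phi where "phi x = Re (cinner x (A *v x))" for x
  have cphi: "continuous_on K phi"
    unfolding phi_def by (intro continuous_intros cont_qform)
  obtain v where vK: "v \<in> K" and vmax: "\<And>y. y \<in> K \<Longrightarrow> phi y \<le> phi v"
    using continuous_attains_sup[OF cK Kne cphi] by blast
  define lam where "lam = phi v"
  have vW: "v \<in> W" and nv: "norm v = 1" using vK by (auto simp: K_def)
  have vv: "cinner v v = 1" using nv by (simp add: cinner_self)
  have scale_bound: "phi y \<le> lam * (norm y)^2" if "y \<in> W" for y
  proof (cases "y = 0")
    case True then show ?thesis by (simp add: phi_def)
  next
    case False
    define z where "z = (1 / norm y) *\<^sub>R y"
    have "z \<in> W" using Wscale[OF that, of "complex_of_real (1 / norm y)"]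
      unfolding ofreal_smult z_def .
    then have "z \<in> K" using False by (simp add: K_def z_def)
    then have "phi z \<le> lam" using vmax lam_def by blast
    moreover have "phi z = phi y / (norm y)^2"
      unfolding z_def phi_def ofreal_smult[symmetric]
      by (simp add: mv_scale cinner_scale_left cinner_scale_right power2_eq_square)
    ultimately show ?thesis using False by (simp add: divide_le_eq)
  qed
  have key: "Re (cinner w (A *v v)) = 0" if wW: "w \<in> W" and wo: "cinner v w = 0" for w
  proof -
    have wv: "cinner w v = 0" using wo cinner_cnj[of v w] by simp
    have sym: "cinner v (A *v w) = cnj (cinner w (A *v v))"
      by (simp add: herm_sym[OF herm] cinner_cnj)
    show ?thesis
    proof (rule quad_zero)
      fix t :: real
      define y where "y = v + complex_of_real t *s w"
      have yW: "y \<in> W" unfolding y_def by (intro Wadd Wscale vW wW)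
      have cyy: "cinner y y = 1 + complex_of_real (t*t) * cinner w w"
        unfolding y_def
        by (simp add: cinner_add_left cinner_add_right cinner_scale_left cinner_scale_right
              vv wo wv)
      have ny: "(norm y)^2 = 1 + t^2 * (norm w)^2"
      proof -
        have "(norm y)^2 = Re (cinner y y)" by (simp add: Re_cinner_self)
        also have "\<dots> = 1 + t*t * Re (cinner w w)" by (simp add: cyy)
        finally show ?thesis by (simp add: Re_cinner_self power2_eq_square)
      qed
      have py: "phi y = lam + 2 * t * Re (cinner w (A *v v)) + t^2 * phi w"
        unfolding y_def phi_def lam_def qform_expand sym by (simp add: power2_eq_square)
      have "phi y \<le> lam * (norm y)^2" by (rule scale_bound[OF yW])
      then show "2 * t * Re (cinner w (A *v v)) + t^2 * (phi w - lam * (norm w)^2) \<le> 0"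
        using py ny by (simp add: algebra_simps)
    qed
  qed
  have key2: "cinner w (A *v v) = 0" if wW: "w \<in> W" and wo: "cinner v w = 0" for w
  proof -
    have "Re (cinner (\<i> *s w) (A *v v)) = 0"
      by (rule key) (use wW wo Wscale in \<open>auto simp: cinner_scale_right\<close>)
    then have "Im (cinner w (A *v v)) = 0" by (simp add: cinner_scale_left)
    moreover have "Re (cinner w (A *v v)) = 0" by (rule key[OF wW wo])
    ultimately show ?thesis by (simp add: complex_eq_iff)
  qed
  define z where "z = A *v v - complex_of_real lam *s v"
  have zW: "z \<in> W" unfolding z_def by (intro Wdiff Wscale WA vW)
  have vAv: "cinner v (A *v v) = complex_of_real lam"
    unfolding lam_def phi_def by (rule herm_real[OF herm])
  have vz: "cinner v z = 0" unfolding z_def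
    by (simp add: cinner_diff_right cinner_scale_right vAv vv)
  have zv: "cinner z v = 0" using vz cinner_cnj[of v z] by simp
  have "cinner z z = cinner z (A *v v - complex_of_real lam *s v)"
    by (simp only: z_def[symmetric])
  also have "\<dots> = cinner z (A *v v) - complex_of_real lam * cinner z v"
    by (simp only: cinner_diff_right cinner_scale_right)
  also have "\<dots> = 0" using key2[OF zW vz] zv by simp
  finally have "z = 0" by (simp add: cinner_self_eq0)
  then have "A *v v = complex_of_real lam *s v" by (simp add: z_def)
  then show ?thesis using nv vW by (auto simp: W_def)
qed




definition orthonormal :: "(complex^'n) set \<Rightarrow> bool" where
  "orthonormal S \<longleftrightarrow> (\<forall>s\<in>S. cinner s s = 1) \<and> (\<forall>s\<in>S. \<forall>t\<in>S. s \<noteq> t \<longrightarrow> cinner s t = 0)"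

lemma ortho_complement:
  fixes S :: "(complex^'n) set"
  assumes fin: "finite S" and on: "orthonormal S" and card: "card S < CARD('n)"
  shows "\<exists>x. x \<noteq> 0 \<and> (\<forall>s\<in>S. cinner s x = 0)"
proof -
  have "vec.span S \<noteq> UNIV"
  proof
    assume eq: "vec.span S = UNIV"
    have "vec.dim (UNIV::(complex^'n) set) \<le> card S"
      by (rule vec.dim_le_card) (use eq fin in auto)
    then show False using card by (simp add: card_cart_basis)
  qed
  then obtain y where y: "y \<notin> vec.span S" by blast
  define x where "x = y - (\<Sum>s\<in>S. cinner s y *s s)"
  have orth: "cinner t x = 0" if t: "t \<in> S" for t
  proof -
    have "cinner t (\<Sum>s\<in>S. cinner s y *s s) = (\<Sum>s\<in>S. cinner s y * cinner t s)"
      by (simp add: cinner_sum_right cinner_scale_right)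
    also have "\<dots> = cinner t y * cinner t t + (\<Sum>s\<in>S - {t}. cinner s y * cinner t s)"
      using fin t by (simp add: sum.remove)
    also have "(\<Sum>s\<in>S - {t}. cinner s y * cinner t s) = 0"
      using on t by (intro sum.neutral) (auto simp: orthonormal_def)
    also have "cinner t t = 1" using on t by (simp add: orthonormal_def)
    finally show ?thesis by (simp add: x_def cinner_diff_right)
  qed
  have "x \<noteq> 0"
  proof
    assume "x = 0"
    then have "y = (\<Sum>s\<in>S. cinner s y *s s)" by (simp add: x_def)
    also have "\<dots> \<in> vec.span S"
      by (intro vec.span_sum vec.span_scale vec.span_base)
    finally show False using y by blast
  qed
  then show ?thesis using orth by blast
qed

lemma spectral_family:
  fixes A :: "complex^'n^'n"
  assumes herm: "hermitian A"
  shows "k \<le> CARD('n) \<Longrightarrow> \<exists>S. finite S \<and> card S = k \<and> orthonormal S \<and>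
           (\<forall>s\<in>S. \<exists>l::real. A *v s = complex_of_real l *s s)"
proof (induction k)
  case 0
  show ?case by (rule exI[of _ "{}"]) (simp add: orthonormal_def)
next
  case (Suc k)
  then obtain S where fin: "finite S" and cS: "card S = k" and on: "orthonormal S"
    and eig: "\<forall>s\<in>S. \<exists>l::real. A *v s = complex_of_real l *s s" by auto
  have "card S < CARD('n)" using Suc.prems cS by simp
  then obtain x0 where x0: "x0 \<noteq> 0" "\<forall>s\<in>S. cinner s x0 = 0"
    using ortho_complement[OF fin on] by blast
  obtain v l where nv: "norm v = 1" and vo: "\<forall>s\<in>S. cinner s v = 0"
    and vl: "A *v v = complex_of_real l *s v"
    using eig_exists[OF herm eig x0] by blast
  have vv: "cinner v v = 1" using nv by (simp add: cinner_self)
  have vS: "v \<notin> S" using vo vv by auto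
  have on': "orthonormal (insert v S)"
    unfolding orthonormal_def
  proof (intro conjI ballI impI)
    fix s assume "s \<in> insert v S" then show "cinner s s = 1"
      using vv on by (auto simp: orthonormal_def)
  next
    fix s t assume s: "s \<in> insert v S" and t: "t \<in> insert v S" and st: "s \<noteq> t"
    have vs: "cinner v s = 0" if "s \<in> S" for s
      using vo that cinner_cnj[of s v] by simp
    show "cinner s t = 0" using s t st vo vs on by (auto simp: orthonormal_def)
  qed
  show ?case
    by (rule exI[of _ "insert v S"]) (use fin cS vS on' eig vl in auto)
qed

lemma unitary_right: "unitary U \<Longrightarrow> U ** adj U = mat 1"
  unfolding unitary_def using matrix_left_right_inverse by blast

lemma spectral:
  fixes A :: "complex^'n^'n"
  assumes herm: "hermitian A"
  shows "\<exists>U d. unitary U \<and> A = U ** rdiag d ** adj U"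
proof -
  obtain S where fin: "finite S" and cS: "card S = CARD('n)" and on: "orthonormal S"
    and eig: "\<forall>s\<in>S. \<exists>l::real. A *v s = complex_of_real l *s s"
    using spectral_family[OF herm, of "CARD('n)"] by auto
  obtain b where b: "bij_betw b (UNIV::'n set) S"
    using finite_same_card_bij[of "UNIV::'n set" S] fin cS by auto
  have bS: "b j \<in> S" for j using b by (auto simp: bij_betw_def)
  have binj: "b i = b j \<longleftrightarrow> i = j" for i j using b by (auto simp: bij_betw_def inj_on_def)
  define d where "d j = (SOME l::real. A *v b j = complex_of_real l *s b j)" for j
  have dj: "A *v b j = complex_of_real (d j) *s b j" for j
  proof -
    have "\<exists>l::real. A *v b j = complex_of_real l *s b j" using eig bS by blast
    then show ?thesis unfolding d_def by (rule someI_ex)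
  qed
  define U :: "complex^'n^'n" where "U = (\<chi> i j. b j $ i)"
  have unit: "unitary U"
    unfolding unitary_def
  proof -
    have "(adj U ** U) $ i $ j = cinner (b i) (b j)" for i j
      by (simp add: U_def matrix_matrix_mult_def cinner_def)
    also have "cinner (b i) (b j) = (if i = j then 1 else 0)" for i j
      using on bS binj by (auto simp: orthonormal_def)
    finally show "adj U ** U = mat 1" by (simp add: vec_eq_iff mat_def)
  qed
  have AU: "A ** U = U ** rdiag d"
  proof -
    have "(A ** U) $ i $ j = (A *v b j) $ i" for i j
      by (simp add: U_def matrix_matrix_mult_def matrix_vector_mult_def)
    then show ?thesis by (simp add: vec_eq_iff dj matrix_rdiag U_def mult.commute)
  qed
  have "A = A ** (U ** adj U)" by (simp add: unitary_right[OF unit])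
  also have "\<dots> = U ** rdiag d ** adj U" by (simp add: matrix_mul_assoc AU)
  finally show ?thesis using unit by blast
qed




lemma unitary_cancel1: "unitary U \<Longrightarrow> X ** adj U ** U = X"
  by (metis matrix_mul_assoc matrix_mul_rid unitary_def)
lemma unitary_cancel2: "unitary U \<Longrightarrow> X ** U ** adj U = X"
  by (metis matrix_mul_assoc matrix_mul_rid unitary_right)
lemma unitary_cancel1': "unitary U \<Longrightarrow> adj U ** U = mat 1"
  by (simp add: unitary_def)

lemma herm_diag: "hermitian (U ** rdiag d ** adj U)"
  by (simp add: hermitian_def adj_mult matrix_mul_assoc)

lemma mfun_unique_aux:
  assumes U: "unitary U" and V: "unitary V"
    and eq: "U ** rdiag d ** adj U = V ** rdiag e ** adj V"
  shows "U ** rdiag (f \<circ> d) ** adj U = V ** rdiag (f \<circ> e) ** adj V"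
proof -
  define W where "W = adj V ** U"
  have "adj V ** (U ** rdiag d ** adj U) ** U = adj V ** (V ** rdiag e ** adj V) ** U"
    by (simp add: eq)
  then have WD: "W ** rdiag d = rdiag e ** W"
    using U V by (simp add: W_def matrix_mul_assoc unitary_cancel1 unitary_cancel2 unitary_cancel1')
  have ent: "W $ i $ j * d j = e i * W $ i $ j" for i j
    using WD[unfolded vec_eq_iff] by (simp add: matrix_rdiag rdiag_matrix)
  have ent2: "W $ i $ j * (f \<circ> d) j = (f \<circ> e) i * W $ i $ j" for i j
  proof (cases "W $ i $ j = 0")
    case False
    then have "d j = e i" using ent[of i j] by (simp add: mult.commute)
    then show ?thesis by (simp add: mult.commute)
  qed simp
  have WF: "W ** rdiag (f \<circ> d) = rdiag (f \<circ> e) ** W"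
    by (simp add: vec_eq_iff matrix_rdiag rdiag_matrix ent2 del: comp_apply)
  have "U ** rdiag (f \<circ> d) ** adj U = V ** (W ** rdiag (f \<circ> d)) ** adj U"
    using V by (simp add: W_def matrix_mul_assoc unitary_right)
  also have "\<dots> = V ** rdiag (f \<circ> e) ** (W ** adj U)"
    by (simp add: WF matrix_mul_assoc)
  also have "W ** adj U = adj V"
    using U by (simp add: W_def matrix_mul_assoc[symmetric] unitary_right)
  finally show ?thesis .
qed

lemma mfun_eq:
  assumes U: "unitary U" and A: "A = U ** rdiag d ** adj U"
  shows "mfun f A = U ** rdiag (f \<circ> d) ** adj U"
proof -
  let ?P = "\<lambda>B. \<exists>U d. unitary U \<and> A = U ** rdiag d ** adj U \<and> B = U ** rdiag (f \<circ> d) ** adj U"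
  have "?P (U ** rdiag (f \<circ> d) ** adj U)" using U A by blast
  then have "?P (mfun f A)" unfolding mfun_def by (rule someI)
  then obtain V e where V: "unitary V" and Ae: "A = V ** rdiag e ** adj V"
    and B: "mfun f A = V ** rdiag (f \<circ> e) ** adj V" by blast
  show ?thesis unfolding B using mfun_unique_aux[OF V U, of e d f] Ae A by simp
qed

lemma herm_mfun: "hermitian A \<Longrightarrow> hermitian (mfun f A)"
  by (metis herm_diag mfun_eq spectral)

lemma mfun_comp:
  assumes "hermitian A" shows "mfun g (mfun f A) = mfun (g \<circ> f) A"
proof -
  obtain U d where U: "unitary U" and A: "A = U ** rdiag d ** adj U" using spectral[OF assms] by blast
  have "mfun f A = U ** rdiag (f \<circ> d) ** adj U" by (rule mfun_eq[OF U A])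
  then have "mfun g (mfun f A) = U ** rdiag (g \<circ> (f \<circ> d)) ** adj U" by (rule mfun_eq[OF U])
  also have "\<dots> = mfun (g \<circ> f) A" using mfun_eq[OF U A, of "g \<circ> f"] by (simp add: comp_assoc)
  finally show ?thesis .
qed

lemma diag_mult:
  assumes U: "unitary U"
  shows "(U ** rdiag a ** adj U) ** (U ** rdiag b ** adj U) = U ** rdiag (\<lambda>i. a i * b i) ** adj U"
proof -
  have "(U ** rdiag a ** adj U) ** (U ** rdiag b ** adj U) = U ** rdiag a ** (adj U ** U) ** rdiag b ** adj U"
    by (simp add: matrix_mul_assoc)
  also have "\<dots> = U ** (rdiag a ** rdiag b) ** adj U"
    using U by (simp add: unitary_def matrix_mul_assoc)
  finally show ?thesis by (simp add: rdiag_mult)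
qed

lemma mfun_mult:
  assumes "hermitian A" shows "mfun f A ** mfun g A = mfun (\<lambda>t. f t * g t) A"
proof -
  obtain U d where U: "unitary U" and A: "A = U ** rdiag d ** adj U" using spectral[OF assms] by blast
  show ?thesis
    unfolding mfun_eq[OF U A] diag_mult[OF U] by (simp add: comp_def)
qed

lemma matrix_add_rdistrib: "((A::complex^'n^'m) + B) ** C = A ** C + B ** C"
  by (simp add: vec_eq_iff matrix_matrix_mult_def sum.distrib distrib_right)
lemma matrix_diff_rdistrib: "((A::complex^'n^'m) - B) ** C = A ** C - B ** C"
  by (simp add: vec_eq_iff matrix_matrix_mult_def sum_subtractf left_diff_distrib)
lemma matrix_diff_ldistrib: "(C::complex^'n^'m) ** (A - B) = C ** A - C ** B"
  by (simp add: vec_eq_iff matrix_matrix_mult_def sum_subtractf right_diff_distrib)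

lemma diag_add: "U ** rdiag a ** adj U + U ** rdiag b ** adj U = U ** rdiag (\<lambda>i. a i + b i) ** adj U"
proof -
  have "rdiag a + rdiag b = rdiag (\<lambda>i. a i + b i)" by (simp add: vec_eq_iff)
  then show ?thesis
    by (metis matrix_add_ldistrib matrix_add_rdistrib)
qed

lemma qform_diag:
  assumes U: "unitary U"
  shows "cinner x ((U ** rdiag d ** adj U) *v x) =
     complex_of_real (\<Sum>i\<in>UNIV. d i * (cmod ((adj U *v x) $ i))^2)"
proof -
  define y where "y = adj U *v x"
  have "cinner x ((U ** rdiag d ** adj U) *v x) = cinner x (U *v (rdiag d *v y))"
    by (simp add: y_def matrix_vector_mul_assoc matrix_mul_assoc)
  also have "\<dots> = cinner y (rdiag d *v y)" by (simp add: cinner_mv y_def)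
  also have "\<dots> = (\<Sum>i\<in>UNIV. complex_of_real (d i * (cmod (y $ i))^2))"
  proof -
    have "(rdiag d *v y) $ i = d i * y $ i" for i
    proof -
      have "(rdiag d *v y) $ i = (\<Sum>k\<in>UNIV. if k = i then d i * y $ i else 0)"
        unfolding matrix_vector_mult_def vec_lambda_beta by (rule sum.cong) auto
      then show ?thesis by simp
    qed
    then show ?thesis unfolding cinner_def
      by (intro sum.cong refl) (simp add: complex_norm_square[symmetric] mult.commute mult.left_commute)
  qed
  finally show ?thesis by (simp add: y_def)
qed

lemma axis_form: "unitary U \<Longrightarrow> adj U *v (U *v axis i 1) = axis i 1"
  by (simp add: matrix_vector_mul_assoc unitary_def)

lemma psd_diag_iff:
  assumes U: "unitary U"
  shows "psd (U ** rdiag d ** adj U) \<longleftrightarrow> (\<forall>i. d i \<ge> 0)"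
proof
  assume p: "psd (U ** rdiag d ** adj U)"
  show "\<forall>i. d i \<ge> 0"
  proof
    fix i
    have "0 \<le> Re (cinner (U *v axis i 1) ((U ** rdiag d ** adj U) *v (U *v axis i 1)))"
      using p by (simp add: psd_def psd_form)
    also have "\<dots> = (\<Sum>k\<in>UNIV. d k * (cmod (axis i 1 $ k))^2)"
      by (simp add: qform_diag[OF U] axis_form[OF U])
    also have "\<dots> = (\<Sum>k\<in>UNIV. if k = i then d i else 0)"
      by (rule sum.cong) (auto simp: axis_def)
    finally show "d i \<ge> 0" by simp
  qed
next
  assume d: "\<forall>i. d i \<ge> 0"
  show "psd (U ** rdiag d ** adj U)"
    unfolding psd_def psd_form
    using d by (auto simp: herm_diag qform_diag[OF U] intro!: sum_nonneg)
qed

lemma psd_mfun_cong: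
  assumes p: "psd A" and fg: "\<And>t. t \<ge> 0 \<Longrightarrow> f t = g t"
  shows "mfun f A = mfun g A"
proof -
  obtain U d where U: "unitary U" and A: "A = U ** rdiag d ** adj U"
    using spectral p psd_def by blast
  have "\<forall>i. d i \<ge> 0" using p A psd_diag_iff[OF U] by simp
  then have "f \<circ> d = g \<circ> d" using fg by (auto simp: fun_eq_iff)
  then show ?thesis by (simp add: mfun_eq[OF U A])
qed

lemma psd_mfun:
  assumes h: "hermitian A" and f: "\<And>t. f t \<ge> 0"
  shows "psd (mfun f A)"
proof -
  obtain U d where U: "unitary U" and A: "A = U ** rdiag d ** adj U"
    using spectral h by blast
  show ?thesis unfolding mfun_eq[OF U A] psd_diag_iff[OF U] using f by simp
qed

lemma psd_mfun':
  assumes p: "psd A" and f: "\<And>t. t \<ge> 0 \<Longrightarrow> f t \<ge> 0"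
  shows "psd (mfun f A)"
proof -
  obtain U d where U: "unitary U" and A: "A = U ** rdiag d ** adj U"
    using spectral p psd_def by blast
  have "\<forall>i. d i \<ge> 0" using p A psd_diag_iff[OF U] by simp
  then show ?thesis unfolding mfun_eq[OF U A] psd_diag_iff[OF U] using f by simp
qed

lemma mfun_eigvec:
  fixes A :: "complex^'n^'n"
  assumes h: "hermitian A" and u: "A *v u = complex_of_real l *s u"
  shows "mfun f A *v u = complex_of_real (f l) *s u"
proof -
  obtain U d where U: "unitary U" and A: "A = U ** rdiag d ** adj U"
    using spectral h by blast
  define y where "y = adj U *v u"
  have "rdiag d *v y = adj U *v (A *v u)"
    by (simp add: A y_def matrix_vector_mul_assoc matrix_mul_assoc unitary_cancel1'[OF U] unitary_cancel1[OF U])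
  also have "\<dots> = complex_of_real l *s y" by (simp add: u y_def mv_scale)
  finally have dy: "rdiag d *v y = complex_of_real l *s y" .
  have rv: "(rdiag c *v z) $ i = c i * z $ i" for c :: "'n \<Rightarrow> real" and z :: "complex^'n" and i
  proof -
    have "(rdiag c *v z) $ i = (\<Sum>k\<in>UNIV. if k = i then c i * z $ i else 0)"
      unfolding matrix_vector_mult_def vec_lambda_beta by (rule sum.cong) auto
    then show ?thesis by simp
  qed
  have dl: "d i = l \<or> y $ i = 0" for i using dy[unfolded vec_eq_iff, rule_format, of i]
    by (auto simp: rv)
  then have "rdiag (f \<circ> d) *v y = complex_of_real (f l) *s y"
    unfolding vec_eq_iff rv using dl by (metis comp_apply mult_zero_right vector_smult_component)
  then have "U *v (rdiag (f \<circ> d) *v y) = complex_of_real (f l) *s (U *v y)"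
    by (simp add: mv_scale)
  moreover have "U *v y = u" using U by (simp add: y_def matrix_vector_mul_assoc unitary_right)
  ultimately show ?thesis
    by (simp add: mfun_eq[OF U A] y_def matrix_vector_mul_assoc matrix_mul_assoc)
qed




lemma rdiag_mv: "(rdiag c *v z) $ i = c i * z $ i"
proof -
  have "(rdiag c *v z) $ i = (\<Sum>k\<in>UNIV. if k = i then c i * z $ i else 0)"
    unfolding matrix_vector_mult_def vec_lambda_beta by (rule sum.cong) auto
  then show ?thesis by simp
qed

lemma mv_axis: "((A::complex^'n^'m) *v axis j 1) $ i = A $ i $ j"
proof -
  have "(A *v axis j 1) $ i = (\<Sum>k\<in>UNIV. if k = j then A $ i $ j else 0)"
    unfolding matrix_vector_mult_def vec_lambda_beta by (rule sum.cong) (auto simp: axis_def)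
  then show ?thesis by simp
qed

lemma col_expand: "(A::complex^'n^'m) *v c = (\<Sum>j\<in>UNIV. c $ j *s (A *v axis j 1))"
  unfolding vec_eq_iff sum_component vector_smult_component mv_axis
  by (simp add: matrix_vector_mult_def mult.commute)

lemma cinner_axis: "cinner (axis i 1) (axis j (1::complex)) = (if i = j then 1 else 0)"
proof -
  have "cinner (axis i 1) (axis j (1::complex)) = (\<Sum>k\<in>UNIV. if k = i then (if i = j then 1 else 0) else 0)"
    unfolding cinner_def by (rule sum.cong) (auto simp: axis_def)
  then show ?thesis by simp
qed

lemma cs_complex:
  fixes a b :: "'j \<Rightarrow> complex"
  shows "(cmod (\<Sum>j\<in>J. a j * b j))^2 \<le> (\<Sum>j\<in>J. (cmod (a j))^2) * (\<Sum>j\<in>J. (cmod (b j))^2)"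
proof -
  have "cmod (\<Sum>j\<in>J. a j * b j) \<le> (\<Sum>j\<in>J. cmod (a j) * cmod (b j))"
    by (metis (no_types, lifting) norm_mult norm_sum sum.cong)
  then have "(cmod (\<Sum>j\<in>J. a j * b j))^2 \<le> (\<Sum>j\<in>J. cmod (a j) * cmod (b j))^2"
    by (simp add: power_mono)
  also have "\<dots> \<le> (\<Sum>j\<in>J. (cmod (a j))^2) * (\<Sum>j\<in>J. (cmod (b j))^2)"
    by (rule Cauchy_Schwarz_ineq_sum)
  finally show ?thesis .
qed

lemma bessel:
  fixes u :: "'j \<Rightarrow> complex^'n"
  assumes fin: "finite J" and on: "\<And>i j. i \<in> J \<Longrightarrow> j \<in> J \<Longrightarrow> cinner (u i) (u j) = (if i = j then 1 else 0)"
  shows "(\<Sum>j\<in>J. (cmod (cinner (u j) z))^2) \<le> (norm z)^2"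
proof -
  define a where "a j = cinner (u j) z" for j
  define B where "B = (\<Sum>j\<in>J. (cmod (a j))^2)"
  define p where "p = (\<Sum>j\<in>J. a j *s u j)"
  have pz: "cinner p z = complex_of_real B"
  proof -
    have "cinner p z = (\<Sum>j\<in>J. cnj (a j) * a j)"
      by (simp add: p_def cinner_sum_left cinner_scale_left a_def)
    also have "\<dots> = (\<Sum>j\<in>J. complex_of_real ((cmod (a j))^2))"
      by (intro sum.cong refl) (metis complex_norm_square mult.commute)
    finally show ?thesis by (simp add: B_def)
  qed
  have zp: "cinner z p = complex_of_real B"
    using pz cinner_cnj[of p z] by simp
  have pp: "cinner p p = complex_of_real B"
  proof -
    have inner: "cinner (u i) p = (\<Sum>j\<in>J. a j * cinner (u i) (u j))" for i
      by (simp add: p_def cinner_sum_right cinner_scale_right)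
    have "cinner (\<Sum>j\<in>J. a j *s u j) p = (\<Sum>i\<in>J. cnj (a i) * cinner (u i) p)"
      by (simp add: cinner_sum_left cinner_scale_left)
    then have "cinner p p = (\<Sum>i\<in>J. cnj (a i) * (\<Sum>j\<in>J. a j * cinner (u i) (u j)))"
      unfolding p_def[symmetric] inner .
    also have "\<dots> = (\<Sum>i\<in>J. cnj (a i) * a i)"
    proof (rule sum.cong[OF refl])
      fix i assume i: "i \<in> J"
      have "(\<Sum>j\<in>J. a j * cinner (u i) (u j)) = (\<Sum>j\<in>J. if j = i then a i else 0)"
        using i on by (intro sum.cong refl) auto
      also have "\<dots> = a i" using fin i by simp
      finally show "cnj (a i) * (\<Sum>j\<in>J. a j * cinner (u i) (u j)) = cnj (a i) * a i" by simp
    qed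
    also have "\<dots> = (\<Sum>j\<in>J. complex_of_real ((cmod (a j))^2))"
      by (intro sum.cong refl) (metis complex_norm_square mult.commute)
    finally show ?thesis by (simp add: B_def)
  qed
  have "0 \<le> Re (cinner (z - p) (z - p))" by (simp add: Re_cinner_self)
  also have "Re (cinner (z - p) (z - p)) = (norm z)^2 - B"
    by (simp add: cinner_diff_left cinner_diff_right pz zp pp Re_cinner_self)
  finally show ?thesis by (simp add: B_def a_def)
qed

lemma cinner_scale_real_left: "cinner (complex_of_real r *s x) y = complex_of_real r * cinner x y"
  by (simp add: cinner_scale_left)

lemma mixed_schwarz:
  fixes S :: "complex^'n^'n" and f g :: "real \<Rightarrow> real"
  assumes f0: "\<And>t. t \<ge> 0 \<Longrightarrow> f t \<ge> 0" and g0: "\<And>t. t \<ge> 0 \<Longrightarrow> g t \<ge> 0"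
    and fg: "\<And>t. t \<ge> 0 \<Longrightarrow> f t * g t = t"
  shows "(cmod (cinner y (S *v x)))^2 \<le>
     Re (cinner x (mfun (\<lambda>t. (f t)^2) (mabs S) *v x)) * Re (cinner y (mfun (\<lambda>t. (g t)^2) (mabs (adj S)) *v y))"
proof -
  define M where "M = adj S ** S"
  have hM: "hermitian M" by (simp add: M_def hermitian_def adj_mult)
  obtain V e where V: "unitary V" and Me: "M = V ** rdiag e ** adj V" using spectral[OF hM] by blast
  define v where "v j = V *v axis j 1" for j
  define w where "w j = S *v v j" for j
  have Vv: "adj V *v v j = axis j 1" for j using V by (simp add: v_def axis_form)
  have vv: "cinner (v i) (v j) = (if i = j then 1 else 0)" for i j
    by (simp add: v_def cinner_mv axis_form[OF V] cinner_axis)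
  have Mv: "M *v v j = complex_of_real (e j) *s v j" for j
  proof -
    have "M *v v j = V *v (rdiag e *v (adj V *v v j))"
      by (simp add: Me matrix_vector_mul_assoc matrix_mul_assoc)
    also have "rdiag e *v (adj V *v v j) = complex_of_real (e j) *s axis j 1"
      by (simp add: Vv vec_eq_iff rdiag_mv axis_def)
    finally show ?thesis by (simp add: mv_scale v_def)
  qed
  have ww: "cinner (w i) (w j) = complex_of_real (e j) * (if i = j then 1 else 0)" for i j
  proof -
    have "cinner (w i) (w j) = cinner (v i) (M *v v j)"
      unfolding w_def M_def using cinner_mv[of "v i" "adj S" "S *v v j"]
      by (simp add: matrix_vector_mul_assoc)
    also have "\<dots> = complex_of_real (e j) * (if i = j then 1 else 0)"
      by (simp add: Mv cinner_scale_right vv)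
    finally show ?thesis .
  qed
  have e0: "e j \<ge> 0" for j
  proof -
    have "complex_of_real ((norm (w j))^2) = complex_of_real (e j)"
      using ww[of j j] by (simp add: cinner_self)
    then have "(norm (w j))^2 = e j" using of_real_eq_iff by blast
    then show ?thesis by (metis zero_le_power2)
  qed
  have w0: "w j = 0" if "e j = 0" for j
    using ww[of j j] that by (simp add: cinner_self_eq0)
  define s where "s j = sqrt (e j)" for j
  have mabsS: "mabs S = V ** rdiag (sqrt \<circ> e) ** adj V"
    unfolding mabs_def M_def[symmetric] by (rule mfun_eq[OF V Me])
  have F2: "mfun (\<lambda>t. (f t)^2) (mabs S) = V ** rdiag ((\<lambda>t. (f t)^2) \<circ> (sqrt \<circ> e)) ** adj V"
    by (rule mfun_eq[OF V mabsS])
  define c where "c = adj V *v x"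
  have Fform: "Re (cinner x (mfun (\<lambda>t. (f t)^2) (mabs S) *v x)) = (\<Sum>j\<in>UNIV. (f (s j))^2 * (cmod (c $ j))^2)"
    unfolding F2 qform_diag[OF V] by (simp add: c_def s_def)
  define N where "N = S ** adj S"
  have hN: "hermitian N" by (simp add: N_def hermitian_def adj_mult)
  have mabsS': "mabs (adj S) = mfun sqrt N" by (simp add: mabs_def N_def)
  define R where "R = mfun (g \<circ> sqrt) N"
  have hR: "hermitian R" unfolding R_def by (rule herm_mfun[OF hN])
  have G2: "mfun (\<lambda>t. (g t)^2) (mabs (adj S)) = R ** R"
  proof -
    have "mfun (\<lambda>t. (g t)^2) (mabs (adj S)) = mfun ((\<lambda>t. (g t)^2) \<circ> sqrt) N"
      unfolding mabsS' by (rule mfun_comp[OF hN])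
    also have "\<dots> = mfun (\<lambda>t. (g \<circ> sqrt) t * (g \<circ> sqrt) t) N"
      by (simp add: comp_def power2_eq_square)
    also have "\<dots> = R ** R" unfolding R_def by (rule mfun_mult[OF hN, symmetric])
    finally show ?thesis .
  qed
  have Gform: "Re (cinner y (mfun (\<lambda>t. (g t)^2) (mabs (adj S)) *v y)) = (norm (R *v y))^2"
  proof -
    have "cinner y ((R ** R) *v y) = cinner (R *v y) (R *v y)"
      by (simp add: matrix_vector_mul_assoc[symmetric] herm_sym[OF hR])
    then show ?thesis by (simp add: G2 Re_cinner_self)
  qed
  define J where "J = {j. e j > 0}"
  define u where "u j = complex_of_real (1 / s j) *s w j" for j
  have wu: "w j = complex_of_real (s j) *s u j" if "j \<in> J" for j
  proof -
    have "s j > 0" using that by (simp add: J_def s_def)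
    then show ?thesis by (simp add: u_def vec_eq_iff)
  qed
  have uu: "cinner (u i) (u j) = (if i = j then 1 else 0)" if "i \<in> J" "j \<in> J" for i j
  proof (cases "i = j")
    case True
    have "e j > 0" using that by (simp add: J_def)
    then have "complex_of_real (1 / s j) * complex_of_real (1 / s j) * complex_of_real (e j) = 1"
      by (simp add: s_def field_simps flip: of_real_mult)
    then show ?thesis using True
      by (simp add: u_def cinner_scale_left cinner_scale_right ww mult.assoc)
  next
    case False
    then show ?thesis by (simp add: u_def cinner_scale_left cinner_scale_right ww)
  qed
  have Nw: "N *v w j = complex_of_real (e j) *s w j" for j
  proof -
    have "N *v w j = S *v (M *v v j)"
      by (simp add: N_def M_def w_def matrix_vector_mul_assoc matrix_mul_assoc)
    then show ?thesis by (simp add: Mv mv_scale w_def)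
  qed
  have Nu: "N *v u j = complex_of_real (e j) *s u j" for j
    by (simp add: u_def mv_scale Nw vector_smult_assoc mult.commute)
  have Ru: "R *v u j = complex_of_real (g (s j)) *s u j" for j
    unfolding R_def using mfun_eigvec[OF hN Nu[of j], of "g \<circ> sqrt"] by (simp add: s_def)
  have Sx: "S *v x = (\<Sum>j\<in>UNIV. c $ j *s w j)"
  proof -
    have "x = V *v c" using V by (simp add: c_def matrix_vector_mul_assoc unitary_right)
    then have "S *v x = (S ** V) *v c" by (simp add: matrix_vector_mul_assoc)
    also have "\<dots> = (\<Sum>j\<in>UNIV. c $ j *s ((S ** V) *v axis j 1))" by (rule col_expand)
    finally show ?thesis by (simp add: w_def v_def matrix_vector_mul_assoc)
  qed
  define a where "a j = complex_of_real (f (s j)) * c $ j" for j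
  define b where "b j = complex_of_real (g (s j)) * cinner y (u j)" for j
  have yS: "cinner y (S *v x) = (\<Sum>j\<in>J. a j * b j)"
  proof -
    have "cinner y (S *v x) = (\<Sum>j\<in>UNIV. c $ j * cinner y (w j))"
      by (simp add: Sx cinner_sum_right cinner_scale_right)
    also have "\<dots> = (\<Sum>j\<in>J. c $ j * cinner y (w j))"
    proof (rule sum.mono_neutral_right)
      show "\<forall>i\<in>UNIV - J. c $ i * cinner y (w i) = 0"
      proof
        fix i assume "i \<in> UNIV - J"
        then have "e i = 0" using e0[of i] by (auto simp: J_def)
        then show "c $ i * cinner y (w i) = 0" by (simp add: w0)
      qed
    qed auto
    also have "\<dots> = (\<Sum>j\<in>J. a j * b j)"
    proof (rule sum.cong[OF refl])
      fix j assume j: "j \<in> J"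
      have sj: "s j \<ge> 0" using e0[of j] by (simp add: s_def)
      have "c $ j * cinner y (w j) = c $ j * (complex_of_real (s j) * cinner y (u j))"
        by (simp add: wu[OF j] cinner_scale_right)
      also have "complex_of_real (s j) = complex_of_real (f (s j)) * complex_of_real (g (s j))"
        using fg[OF sj] by (metis of_real_mult)
      finally show "c $ j * cinner y (w j) = a j * b j" by (simp add: a_def b_def mult_ac)
    qed
    finally show ?thesis .
  qed
  have bR: "cmod (b j) = cmod (cinner (u j) (R *v y))" for j
  proof -
    have "cinner (u j) (R *v y) = cinner (R *v u j) y" by (rule herm_sym[OF hR])
    also have "\<dots> = complex_of_real (g (s j)) * cinner (u j) y" by (simp add: Ru cinner_scale_left)
    finally have "cinner (u j) (R *v y) = complex_of_real (g (s j)) * cinner (u j) y" .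
    moreover have "cmod (cinner (u j) y) = cmod (cinner y (u j))"
      by (metis cinner_cnj complex_mod_cnj)
    ultimately show ?thesis by (simp add: b_def norm_mult)
  qed
  have finJ: "finite J" by simp
  have A1: "(\<Sum>j\<in>J. (cmod (a j))^2) \<le> Re (cinner x (mfun (\<lambda>t. (f t)^2) (mabs S) *v x))"
  proof -
    have "(\<Sum>j\<in>J. (cmod (a j))^2) \<le> (\<Sum>j\<in>UNIV. (cmod (a j))^2)"
      by (rule sum_mono2) auto
    also have "\<dots> = (\<Sum>j\<in>UNIV. (f (s j))^2 * (cmod (c $ j))^2)"
      by (simp add: a_def norm_mult power_mult_distrib)
    finally show ?thesis using Fform by simp
  qed
  have B1: "(\<Sum>j\<in>J. (cmod (b j))^2) \<le> Re (cinner y (mfun (\<lambda>t. (g t)^2) (mabs (adj S)) *v y))"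
    unfolding Gform bR by (rule bessel[OF finJ uu])
  have "(cmod (cinner y (S *v x)))^2 \<le> (\<Sum>j\<in>J. (cmod (a j))^2) * (\<Sum>j\<in>J. (cmod (b j))^2)"
    unfolding yS by (rule cs_complex)
  also have "\<dots> \<le> Re (cinner x (mfun (\<lambda>t. (f t)^2) (mabs S) *v x)) * Re (cinner y (mfun (\<lambda>t. (g t)^2) (mabs (adj S)) *v y))"
  proof (rule mult_mono[OF A1 B1])
    have "0 \<le> (\<Sum>j\<in>J. (cmod (a j))^2)" by (rule sum_nonneg) simp
    then show "0 \<le> Re (cinner x (mfun (\<lambda>t. (f t)^2) (mabs S) *v x))" using A1 by linarith
    show "0 \<le> (\<Sum>j\<in>J. (cmod (b j))^2)" by (rule sum_nonneg) simp
  qed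
  finally show ?thesis .
qed




lemma sum_UNIV_plus:
  "(\<Sum>k\<in>(UNIV::('a::finite + 'b::finite) set). h k) = (\<Sum>i\<in>UNIV. h (Inl i)) + (\<Sum>i\<in>UNIV. h (Inr i))"
  using sum.Plus[of "UNIV::'a set" "UNIV::'b set" h] by (simp add: comp_def)

lemma block_mv:
  fixes z :: "complex^('n::finite + 'n)"
  defines "x \<equiv> (\<chi> i. z $ Inl i)" and "y \<equiv> (\<chi> i. z $ Inr i)"
  shows "(blockM A B C D *v z) $ Inl a = (A *v x + B *v y) $ a"
    and "(blockM A B C D *v z) $ Inr a = (C *v x + D *v y) $ a"
  by (simp_all add: blockM_def matrix_vector_mult_def sum_UNIV_plus x_def y_def)

lemma block_form:
  fixes z :: "complex^('n::finite + 'n)"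
  defines "x \<equiv> (\<chi> i. z $ Inl i)" and "y \<equiv> (\<chi> i. z $ Inr i)"
  shows "cinner z (blockM A B C D *v z) = cinner x (A *v x + B *v y) + cinner y (C *v x + D *v y)"
proof -
  have "cinner z (blockM A B C D *v z) =
     (\<Sum>i\<in>UNIV. cnj (z $ Inl i) * (blockM A B C D *v z) $ Inl i) +
     (\<Sum>i\<in>UNIV. cnj (z $ Inr i) * (blockM A B C D *v z) $ Inr i)"
    unfolding cinner_def by (rule sum_UNIV_plus)
  also have "\<dots> = cinner x (A *v x + B *v y) + cinner y (C *v x + D *v y)"
    unfolding block_mv cinner_def x_def y_def by simp
  finally show ?thesis .
qed

lemma adj_blockM: "adj (blockM A B C D) = blockM (adj A) (adj C) (adj B) (adj D)"
  by (simp add: vec_eq_iff blockM_def split: sum.split)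

lemma block_psd:
  assumes hA: "hermitian A" and hB: "hermitian B" and hX: "hermitian X"
    and form: "\<And>x y. 0 \<le> Re (cinner x (A *v x)) + Re (cinner y (B *v y)) + 2 * Re (cinner y (X *v x))"
  shows "psd (blockM A X X B)"
  unfolding psd_def psd_form
proof
  show "hermitian (blockM A X X B)"
    using hA hB hX by (simp add: hermitian_def adj_blockM)
  show "\<forall>z. 0 \<le> Re (cinner z (blockM A X X B *v z))"
  proof
    fix z :: "complex^('a + 'a)"
    define x where "x = (\<chi> i. z $ Inl i)"
    define y where "y = (\<chi> i. z $ Inr i)"
    have "cinner x (X *v y) = cnj (cinner y (X *v x))"
      by (simp add: herm_sym[OF hX] cinner_cnj)
    then have "Re (cinner z (blockM A X X B *v z)) =
        Re (cinner x (A *v x)) + Re (cinner y (B *v y)) + 2 * Re (cinner y (X *v x))"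
      unfolding block_form x_def[symmetric] y_def[symmetric]
      by (simp add: cinner_add_right)
    then show "0 \<le> Re (cinner z (blockM A X X B *v z))" using form by simp
  qed
qed

lemma cscale_mv: "cscale c A *v x = c *s (A *v x)"
  by (simp add: vec_eq_iff matrix_vector_mult_def sum_distrib_left mult.assoc)

lemma amgm:
  fixes a b c :: real
  assumes "c^2 \<le> a * b" "a \<ge> 0" "b \<ge> 0" "c \<ge> 0"
  shows "2 * c \<le> a + b"
proof -
  have h1: "(a+b)^2 - 4*(a*b) = (a-b)^2" by (simp add: power2_eq_square algebra_simps)
  have h2: "(2*c)^2 = 4 * c^2" by (simp add: power2_eq_square)
  have "(2*c)^2 \<le> (a + b)^2"
    using assms(1) h1 h2 zero_le_power2[of "a-b"] by linarith
  then show ?thesis by (rule power2_le_imp_le) (use assms in simp)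
qed

lemma herm_ReM: "hermitian (ReM T)"
  by (simp add: hermitian_def ReM_def adj_cscale adj_add add.commute)

lemma herm_ImM: "hermitian (ImM T)"
proof -
  have "cnj (1 / (2 * \<i>)) = - (1 / (2 * \<i>))" by (simp add: complex_eq_iff)
  then show ?thesis
    by (simp add: hermitian_def ImM_def adj_cscale adj_diff vec_eq_iff algebra_simps)
qed

lemma herm_add: "hermitian A \<Longrightarrow> hermitian B \<Longrightarrow> hermitian (A + B)"
  by (simp add: hermitian_def adj_add)

lemma herm_diff: "hermitian A \<Longrightarrow> hermitian B \<Longrightarrow> hermitian (A - B)"
  by (simp add: hermitian_def adj_diff)

lemma X_form: "cinner y ((ReM T + ImM T) *v x) =
    Complex (1/2) (-1/2) * cinner y (T *v x) + Complex (1/2) (1/2) * cinner y (adj T *v x)"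
proof -
  have e1: "1 / (2 * \<i>) = Complex 0 (-1/2)" by (simp add: complex_eq_iff)
  show ?thesis
    unfolding ReM_def ImM_def matrix_vector_mult_add_rdistrib cscale_mv e1
    by (simp add: cinner_add_right cinner_diff_right cinner_scale_right matrix_vector_mult_diff_rdistrib
        matrix_vector_mult_add_rdistrib complex_eq_iff algebra_simps)
qed

lemma block_main:
  fixes T :: "complex^'n^'n" and f g :: "real \<Rightarrow> real"
  assumes f0: "\<And>t. t \<ge> 0 \<Longrightarrow> f t \<ge> 0" and g0: "\<And>t. t \<ge> 0 \<Longrightarrow> g t \<ge> 0"
    and fg: "\<And>t. t \<ge> 0 \<Longrightarrow> f t * g t = t"
  defines "F \<equiv> mfun (\<lambda>t. (f t)^2) (mabs T) + mfun (\<lambda>t. (f t)^2) (mabs (adj T))"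
    and "G \<equiv> mfun (\<lambda>t. (g t)^2) (mabs T) + mfun (\<lambda>t. (g t)^2) (mabs (adj T))"
    and "X \<equiv> ReM T + ImM T"
  shows "hermitian F" "hermitian G" "hermitian X"
    "0 \<le> Re (cinner x (F *v x)) + Re (cinner y (G *v y)) + 2 * Re (cinner y (X *v x))"
proof -
  have hmabs: "hermitian (mabs S)" for S :: "complex^'n^'n"
    unfolding mabs_def by (rule herm_mfun) (simp add: hermitian_def adj_mult)
  have psdf: "psd (mfun (\<lambda>t. (h t)^2) (mabs S))" for S :: "complex^'n^'n" and h
    by (rule psd_mfun[OF hmabs]) simp
  show hF: "hermitian F" unfolding F_def by (intro herm_add herm_mfun hmabs)
  show hG: "hermitian G" unfolding G_def by (intro herm_add herm_mfun hmabs)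
  show "hermitian X" unfolding X_def by (intro herm_add herm_ReM herm_ImM)
  have nn: "0 \<le> Re (cinner z (mfun (\<lambda>t. (h t)^2) (mabs S) *v z))" for S :: "complex^'n^'n" and h z
    using psdf[of h S] by (simp add: psd_def psd_form)
  define a1 where "a1 = Re (cinner x (mfun (\<lambda>t. (f t)^2) (mabs T) *v x))"
  define a2 where "a2 = Re (cinner x (mfun (\<lambda>t. (f t)^2) (mabs (adj T)) *v x))"
  define b1 where "b1 = Re (cinner y (mfun (\<lambda>t. (g t)^2) (mabs (adj T)) *v y))"
  define b2 where "b2 = Re (cinner y (mfun (\<lambda>t. (g t)^2) (mabs T) *v y))"
  define p where "p = cinner y (T *v x)"
  define q where "q = cinner y (adj T *v x)"
  have p2: "(cmod p)^2 \<le> a1 * b1"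
    unfolding p_def a1_def b1_def by (rule mixed_schwarz[OF f0 g0 fg])
  have q2: "(cmod q)^2 \<le> a2 * b2"
    using mixed_schwarz[OF f0 g0 fg, of y "adj T" x]
    unfolding q_def a2_def b2_def by simp
  have pp: "2 * cmod p \<le> a1 + b1"
    by (rule amgm[OF p2]) (simp_all add: a1_def b1_def nn)
  have qq: "2 * cmod q \<le> a2 + b2"
    by (rule amgm[OF q2]) (simp_all add: a2_def b2_def nn)
  have c1: "cmod (Complex (1/2) (-1/2)) \<le> 1"
    using cmod_le[of "Complex (1/2) (-1/2)"] by simp
  have c2: "cmod (Complex (1/2) (1/2)) \<le> 1"
    using cmod_le[of "Complex (1/2) (1/2)"] by simp
  have "cmod (Complex (1/2) (-1/2) * p + Complex (1/2) (1/2) * q) \<le> cmod p + cmod q"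
  proof -
    have "cmod (Complex (1/2) (-1/2) * p + Complex (1/2) (1/2) * q)
        \<le> cmod (Complex (1/2) (-1/2)) * cmod p + cmod (Complex (1/2) (1/2)) * cmod q"
      by (metis norm_mult norm_triangle_ineq)
    also have "\<dots> \<le> 1 * cmod p + 1 * cmod q"
      by (intro add_mono mult_right_mono c1 c2) simp_all
    finally show ?thesis by simp
  qed
  moreover have "- cmod (Complex (1/2) (-1/2) * p + Complex (1/2) (1/2) * q)
      \<le> Re (Complex (1/2) (-1/2) * p + Complex (1/2) (1/2) * q)"
    using abs_Re_le_cmod[of "Complex (1/2) (-1/2) * p + Complex (1/2) (1/2) * q"] by linarith
  ultimately have "- (cmod p + cmod q) \<le> Re (cinner y (X *v x))"
    unfolding X_def X_form p_def q_def by linarith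
  moreover have "Re (cinner x (F *v x)) = a1 + a2"
    by (simp add: F_def a1_def a2_def matrix_vector_mult_add_rdistrib cinner_add_right)
  moreover have "Re (cinner y (G *v y)) = b1 + b2"
    by (simp add: G_def b1_def b2_def matrix_vector_mult_add_rdistrib cinner_add_right)
  ultimately show "0 \<le> Re (cinner x (F *v x)) + Re (cinner y (G *v y)) + 2 * Re (cinner y (X *v x))"
    using pp qq by linarith
qed




lemma psd_iff: "psd A \<longleftrightarrow> hermitian A \<and> (\<forall>x. 0 \<le> Re (cinner x (A *v x)))"
  by (simp add: psd_def psd_form)

lemma psd_add: "psd A \<Longrightarrow> psd B \<Longrightarrow> psd (A + B)"
  by (simp add: psd_iff herm_add matrix_vector_mult_add_rdistrib cinner_add_right add_nonneg_nonneg)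

lemma loewner_trans: "loewner_le A B \<Longrightarrow> loewner_le B C \<Longrightarrow> loewner_le A C"
  unfolding loewner_le_def using psd_add[of "C - B" "B - A"] by simp

lemma psd_congr:
  assumes hK: "hermitian K" and p: "psd P"
  shows "psd (K ** P ** K)"
  unfolding psd_iff
proof
  show "hermitian (K ** P ** K)" using hK p
    by (simp add: psd_iff hermitian_def adj_mult matrix_mul_assoc)
  show "\<forall>x. 0 \<le> Re (cinner x ((K ** P ** K) *v x))"
  proof
    fix x
    have "cinner x ((K ** P ** K) *v x) = cinner (K *v x) (P *v (K *v x))"
      by (simp add: matrix_vector_mul_assoc[symmetric] herm_sym[OF hK])
    then show "0 \<le> Re (cinner x ((K ** P ** K) *v x))" using p by (simp add: psd_iff)
  qed
qed

lemma loewner_congr: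
  assumes hK: "hermitian K" and le: "loewner_le P Q"
  shows "loewner_le (K ** P ** K) (K ** Q ** K)"
proof -
  have "K ** Q ** K - K ** P ** K = K ** (Q - P) ** K"
    by (simp add: matrix_diff_ldistrib matrix_diff_rdistrib)
  then show ?thesis using psd_congr[OF hK] le by (simp add: loewner_le_def)
qed

lemma rdiag_one: "rdiag (\<lambda>i. 1) = mat 1"
  by (simp add: vec_eq_iff mat_def)

lemma diag_id: "unitary U \<Longrightarrow> U ** rdiag (\<lambda>i. 1) ** adj U = mat 1"
  by (simp add: rdiag_one unitary_right)

lemma mfun_id:
  assumes "hermitian A" shows "mfun (\<lambda>t. t) A = A"
proof -
  obtain U d where U: "unitary U" and A: "A = U ** rdiag d ** adj U" using spectral assms by blast
  have "mfun (\<lambda>t. t) A = U ** rdiag ((\<lambda>t. t) \<circ> d) ** adj U" by (rule mfun_eq[OF U A])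
  also have "(\<lambda>t. t) \<circ> d = d" by (simp add: fun_eq_iff)
  finally show ?thesis using A by simp
qed

lemma diag_diff: "U ** rdiag a ** adj U - U ** rdiag b ** adj U = U ** rdiag (\<lambda>i. a i - b i) ** adj U"
proof -
  have "rdiag a - rdiag b = rdiag (\<lambda>i. a i - b i)" by (simp add: vec_eq_iff)
  then show ?thesis
    by (metis matrix_diff_ldistrib matrix_diff_rdistrib)
qed

lemma diag_eigvec:
  assumes U: "unitary U"
  shows "(U ** rdiag d ** adj U) *v (U *v axis i 1) = complex_of_real (d i) *s (U *v axis i 1)"
proof -
  have "(U ** rdiag d ** adj U) *v (U *v axis i 1) = U *v (rdiag d *v (adj U *v (U *v axis i 1)))"
    by (simp add: matrix_vector_mul_assoc matrix_mul_assoc)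
  also have "rdiag d *v (adj U *v (U *v axis i 1)) = complex_of_real (d i) *s axis i 1"
    unfolding axis_form[OF U] by (simp add: vec_eq_iff rdiag_mv axis_def)
  finally show ?thesis by (simp add: mv_scale)
qed

lemma sqrt_mono:
  assumes pP: "psd P" and pQ: "psd Q"
    and le: "\<And>y. Re (cinner y ((P ** P) *v y)) \<le> Re (cinner y ((Q ** Q) *v y))"
  shows "loewner_le P Q"
proof (rule ccontr)
  assume nle: "\<not> loewner_le P Q"
  have hP: "hermitian P" and hQ: "hermitian Q" using pP pQ by (auto simp: psd_iff)
  have hD: "hermitian (P - Q)" by (rule herm_diff[OF hP hQ])
  obtain U c where U: "unitary U" and D: "P - Q = U ** rdiag c ** adj U"
    using spectral[OF hD] by blast
  have "Q - P = U ** rdiag (\<lambda>i. - c i) ** adj U"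
  proof -
    have r0: "rdiag (\<lambda>i. 0) = (0::complex^'a^'a)" by (simp add: vec_eq_iff)
    have "Q - P = U ** rdiag (\<lambda>i. 0) ** adj U - U ** rdiag c ** adj U"
      by (simp add: r0 D[symmetric])
    also have "\<dots> = U ** rdiag (\<lambda>i. 0 - c i) ** adj U" by (rule diag_diff)
    finally show ?thesis by simp
  qed
  then obtain i where ci: "c i > 0" using nle psd_diag_iff[OF U] unfolding loewner_le_def
    by (metis neg_0_le_iff_le not_le)
  define v where "v = U *v axis i 1"
  have Dv: "(P - Q) *v v = complex_of_real (c i) *s v"
    unfolding D v_def by (rule diag_eigvec[OF U])
  have vv: "cinner v v = 1" by (simp add: v_def cinner_mv axis_form[OF U] cinner_axis)
  have id: "P ** P - Q ** Q = (P - Q) ** P + Q ** (P - Q)"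
    by (simp add: matrix_diff_ldistrib matrix_diff_rdistrib)
  have "cinner v ((P ** P - Q ** Q) *v v) = cinner ((P - Q) *v v) (P *v v) + cinner v (Q *v ((P - Q) *v v))"
    unfolding id matrix_vector_mult_add_rdistrib cinner_add_right
    by (simp add: matrix_vector_mul_assoc[symmetric] herm_sym[OF hD])
  also have "\<dots> = complex_of_real (c i) * (cinner v (P *v v) + cinner v (Q *v v))"
    by (simp add: Dv cinner_scale_left cinner_scale_right mv_scale distrib_left)
  finally have e: "Re (cinner v ((P ** P - Q ** Q) *v v)) = c i * (Re (cinner v (P *v v)) + Re (cinner v (Q *v v)))"
    by simp
  have "Re (cinner v ((P ** P - Q ** Q) *v v)) \<le> 0"
    using le[of v] by (simp add: matrix_vector_mult_diff_rdistrib cinner_diff_right)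
  then have s0: "Re (cinner v (P *v v)) + Re (cinner v (Q *v v)) \<le> 0"
    using e ci by (simp add: mult_le_0_iff)
  have p0: "Re (cinner v (P *v v)) \<ge> 0" and q0: "Re (cinner v (Q *v v)) \<ge> 0"
    using pP pQ by (auto simp: psd_iff)
  have "Re (cinner v ((P - Q) *v v)) = c i" by (simp add: Dv cinner_scale_right vv)
  moreover have "Re (cinner v ((P - Q) *v v)) = Re (cinner v (P *v v)) - Re (cinner v (Q *v v))"
    by (simp add: matrix_vector_mult_diff_rdistrib cinner_diff_right)
  ultimately show False using s0 p0 q0 ci by linarith
qed

lemma cscale_mult_left: "cscale c A ** B = cscale c (A ** B)"
  by (simp add: vec_eq_iff matrix_matrix_mult_def sum_distrib_left mult.assoc)
lemma cscale_mult_right: "A ** cscale c B = cscale c (A ** B)"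
  by (simp add: vec_eq_iff matrix_matrix_mult_def sum_distrib_left mult.left_commute)

lemma gm_setup:
  assumes V: "unitary V" and Aa: "A = V ** rdiag a ** adj V" and apos: "\<forall>i. a i > 0"
  defines "K \<equiv> mfun sqrt A" and "H \<equiv> mfun (\<lambda>t. 1 / sqrt t) A"
  shows "hermitian K" "hermitian H" "H ** K = mat 1" "K ** H = mat 1" "K ** K = A"
proof -
  have K: "K = V ** rdiag (sqrt \<circ> a) ** adj V" unfolding K_def by (rule mfun_eq[OF V Aa])
  have H: "H = V ** rdiag ((\<lambda>t. 1 / sqrt t) \<circ> a) ** adj V" unfolding H_def by (rule mfun_eq[OF V Aa])
  show "hermitian K" "hermitian H" by (simp_all add: K H herm_diag)
  have ane2: "a i > 0" for i using apos by blast
  have ane: "a i \<noteq> 0" "a i > 0" for i using ane2[of i] by simp_all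
  have one: "(\<lambda>i. ((\<lambda>t. 1 / sqrt t) \<circ> a) i * (sqrt \<circ> a) i) = (\<lambda>i. 1)"
    by (simp add: fun_eq_iff ane)
  show "H ** K = mat 1" unfolding H K diag_mult[OF V] one by (rule diag_id[OF V])
  have one': "(\<lambda>i. (sqrt \<circ> a) i * ((\<lambda>t. 1 / sqrt t) \<circ> a) i) = (\<lambda>i. 1)"
    by (simp add: fun_eq_iff ane)
  show "K ** H = mat 1" unfolding H K diag_mult[OF V] one' by (rule diag_id[OF V])
  have two: "(\<lambda>i. (sqrt \<circ> a) i * (sqrt \<circ> a) i) = a"
    by (simp add: fun_eq_iff ane less_imp_le)
  show "K ** K = A" unfolding K diag_mult[OF V] two Aa ..
qed

lemma gm_le:
  assumes V: "unitary V" and Aa: "A = V ** rdiag a ** adj V" and apos: "\<forall>i. a i > 0"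
    and pB: "psd B" and hY: "hermitian Y"
    and form: "\<And>x y. 0 \<le> Re (cinner x (A *v x)) + Re (cinner y (B *v y)) + 2 * Re (cinner y (Y *v x))"
  shows "loewner_le Y (gmean_pd A B)"
proof -
  define K where "K = mfun sqrt A"
  define H where "H = mfun (\<lambda>t. 1 / sqrt t) A"
  note st = gm_setup[OF V Aa apos, folded K_def H_def]
  have hK: "hermitian K" and hH: "hermitian H" and HK: "H ** K = mat 1" and KH: "K ** H = mat 1"
    and KK: "K ** K = A" using st by auto
  define C where "C = H ** B ** H"
  define W where "W = H ** Y ** H"
  have pC: "psd C" unfolding C_def by (rule psd_congr[OF hH pB])
  have hW: "hermitian W" unfolding W_def using hH hY
    by (simp add: hermitian_def adj_mult matrix_mul_assoc)
  have HAH: "H ** A ** H = mat 1"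
    by (metis HK KH KK matrix_mul_assoc matrix_mul_lid)
  have WW: "Re (cinner y ((W ** W) *v y)) \<le> Re (cinner y (C *v y))" for y
  proof -
    define x' where "x' = - (W *v y)"
    have "0 \<le> Re (cinner (H *v x') (A *v (H *v x'))) + Re (cinner (H *v y) (B *v (H *v y)))
        + 2 * Re (cinner (H *v y) (Y *v (H *v x')))" by (rule form)
    moreover have "cinner (H *v x') (A *v (H *v x')) = cinner x' x'"
      using HAH by (simp add: herm_sym[OF hH, symmetric] matrix_vector_mul_assoc matrix_mul_assoc)
    moreover have "cinner (H *v y) (B *v (H *v y)) = cinner y (C *v y)"
      by (simp add: herm_sym[OF hH, symmetric] matrix_vector_mul_assoc matrix_mul_assoc C_def)
    moreover have "cinner (H *v y) (Y *v (H *v x')) = - cinner (W *v y) (W *v y)"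
    proof -
      have "cinner (H *v y) (Y *v (H *v x')) = cinner y (W *v x')"
        by (simp add: herm_sym[OF hH, symmetric] matrix_vector_mul_assoc matrix_mul_assoc W_def)
      also have "\<dots> = - cinner y (W *v (W *v y))"
        by (simp add: x'_def matrix_vector_mult_def cinner_def sum_negf)
      also have "\<dots> = - cinner (W *v y) (W *v y)" by (simp add: herm_sym[OF hW])
      finally show ?thesis .
    qed
    moreover have "cinner x' x' = cinner (W *v y) (W *v y)"
      by (simp add: x'_def cinner_def)
    moreover have "cinner y ((W ** W) *v y) = cinner (W *v y) (W *v y)"
      by (simp add: matrix_vector_mul_assoc[symmetric] herm_sym[OF hW])
    ultimately show ?thesis by simp
  qed
  define Wa where "Wa = mfun abs W"
  have pWa: "psd Wa" unfolding Wa_def by (rule psd_mfun[OF hW]) simp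
  have WaWa: "Wa ** Wa = W ** W"
  proof -
    have "Wa ** Wa = mfun (\<lambda>t. \<bar>t\<bar> * \<bar>t\<bar>) W" unfolding Wa_def by (rule mfun_mult[OF hW])
    also have "\<dots> = mfun (\<lambda>t. t * t) W" by (simp add: abs_mult_self_eq)
    also have "\<dots> = mfun (\<lambda>t. t) W ** mfun (\<lambda>t. t) W" by (rule mfun_mult[OF hW, symmetric])
    finally show ?thesis by (simp add: mfun_id[OF hW])
  qed
  have WleWa: "loewner_le W Wa"
  proof -
    obtain U c where U: "unitary U" and Wc: "W = U ** rdiag c ** adj U" using spectral[OF hW] by blast
    have Wa_eq: "Wa = U ** rdiag (abs \<circ> c) ** adj U" unfolding Wa_def by (rule mfun_eq[OF U Wc])
    have "Wa - W = U ** rdiag (\<lambda>i. \<bar>c i\<bar> - c i) ** adj U"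
      unfolding Wa_eq by (subst Wc) (simp add: diag_diff comp_def)
    then show ?thesis unfolding loewner_le_def by (simp add: psd_diag_iff[OF U] abs_ge_self)
  qed
  define Z where "Z = mfun sqrt C"
  have pZ: "psd Z" unfolding Z_def by (rule psd_mfun'[OF pC]) simp
  have ZZ: "Z ** Z = C"
  proof -
    have hC: "hermitian C" using pC by (simp add: psd_iff)
    have "Z ** Z = mfun (\<lambda>t. sqrt t * sqrt t) C" unfolding Z_def by (rule mfun_mult[OF hC])
    also have "\<dots> = mfun (\<lambda>t. t) C" by (rule psd_mfun_cong[OF pC]) simp
    finally show ?thesis by (simp add: mfun_id[OF hC])
  qed
  have WaleZ: "loewner_le Wa Z"
    by (rule sqrt_mono[OF pWa pZ]) (simp add: WaWa ZZ WW)
  have WleZ: "loewner_le W Z" by (rule loewner_trans[OF WleWa WaleZ])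
  have "loewner_le (K ** W ** K) (K ** Z ** K)" by (rule loewner_congr[OF hK WleZ])
  moreover have "K ** W ** K = Y"
    unfolding W_def by (simp add: matrix_mul_assoc KH) (simp add: matrix_mul_assoc[symmetric] HK)
  moreover have "K ** Z ** K = gmean_pd A B"
    by (simp add: gmean_pd_def K_def H_def Z_def C_def)
  ultimately show ?thesis by simp
qed

lemma gm_props:
  assumes V: "unitary V" and Aa: "A = V ** rdiag a ** adj V" and apos: "\<forall>i. a i > 0"
    and pB: "psd B"
  shows "psd (gmean_pd A B)"
    and "0 \<le> Re (cinner x (A *v x)) + Re (cinner y (B *v y)) + 2 * Re (cinner y (gmean_pd A B *v x))"
proof -
  define K where "K = mfun sqrt A"
  define H where "H = mfun (\<lambda>t. 1 / sqrt t) A"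
  note st = gm_setup[OF V Aa apos, folded K_def H_def]
  have hK: "hermitian K" and hH: "hermitian H" and HK: "H ** K = mat 1" and KH: "K ** H = mat 1"
    and KK: "K ** K = A" using st by auto
  define C where "C = H ** B ** H"
  have pC: "psd C" unfolding C_def by (rule psd_congr[OF hH pB])
  have hC: "hermitian C" using pC by (simp add: psd_iff)
  define Z where "Z = mfun sqrt C"
  have pZ: "psd Z" unfolding Z_def by (rule psd_mfun'[OF pC]) simp
  have hZ: "hermitian Z" using pZ by (simp add: psd_iff)
  have ZZ: "Z ** Z = C"
  proof -
    have "Z ** Z = mfun (\<lambda>t. sqrt t * sqrt t) C" unfolding Z_def by (rule mfun_mult[OF hC])
    also have "\<dots> = mfun (\<lambda>t. t) C" by (rule psd_mfun_cong[OF pC]) simp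
    finally show ?thesis by (simp add: mfun_id[OF hC])
  qed
  have G: "gmean_pd A B = K ** Z ** K"
    by (simp add: gmean_pd_def K_def H_def Z_def C_def)
  show "psd (gmean_pd A B)" unfolding G by (rule psd_congr[OF hK pZ])
  have KCK: "K ** C ** K = B"
    unfolding C_def by (simp add: matrix_mul_assoc KH) (simp add: matrix_mul_assoc[symmetric] HK)
  define p where "p = K *v x"
  define q where "q = Z *v (K *v y)"
  have e1: "cinner x (A *v x) = cinner p p"
    by (simp add: p_def KK[symmetric] matrix_vector_mul_assoc[symmetric] herm_sym[OF hK])
  have e2: "cinner y (B *v y) = cinner q q"
  proof -
    have "cinner y (B *v y) = cinner y ((K ** Z ** Z ** K) *v y)"
      by (simp add: KCK[symmetric] ZZ[symmetric] matrix_mul_assoc)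
    also have "\<dots> = cinner q q"
      by (simp add: q_def matrix_vector_mul_assoc[symmetric] herm_sym[OF hK] herm_sym[OF hZ])
    finally show ?thesis .
  qed
  have e3: "cinner y (gmean_pd A B *v x) = cinner q p"
    by (simp add: G q_def p_def matrix_vector_mul_assoc[symmetric] herm_sym[OF hK] herm_sym[OF hZ])
  have "0 \<le> Re (cinner (p + q) (p + q))" by (simp add: Re_cinner_self)
  also have "Re (cinner (p + q) (p + q)) = Re (cinner p p) + Re (cinner q q) + 2 * Re (cinner q p)"
  proof -
    have "Re (cinner p q) = Re (cinner q p)" by (metis cinner_cnj cnj.sel(1))
    then show ?thesis by (simp add: cinner_add_left cinner_add_right)
  qed
  finally show "0 \<le> Re (cinner x (A *v x)) + Re (cinner y (B *v y)) + 2 * Re (cinner y (gmean_pd A B *v x))"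
    by (simp add: e1 e2 e3)
qed




lemma mat1_mv: "(mat 1 :: complex^'n^'n) *v x = x" by simp

lemma form_shift:
  "Re (cinner x ((A + cscale (complex_of_real e) (mat 1)) *v x)) = Re (cinner x (A *v x)) + e * (norm x)^2"
  by (simp add: matrix_vector_mult_add_rdistrib cscale_mv cinner_add_right cinner_scale_right cinner_self)

lemma shift_diag:
  assumes V: "unitary V" and A: "A = V ** rdiag d ** adj V"
  shows "A + cscale (complex_of_real e) (mat 1) = V ** rdiag (\<lambda>i. d i + e) ** adj V"
proof -
  have r: "rdiag (\<lambda>i. e) = cscale (complex_of_real e) (mat 1)" by (simp add: vec_eq_iff mat_def)
  have "V ** rdiag (\<lambda>i. e) ** adj V = V ** cscale (complex_of_real e) (mat 1) ** adj V"
    by (simp only: r)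
  also have "\<dots> = cscale (complex_of_real e) (V ** mat 1 ** adj V)"
    by (simp only: cscale_mult_left cscale_mult_right)
  also have "\<dots> = cscale (complex_of_real e) (mat 1)"
    using V by (simp add: unitary_right)
  finally have "V ** rdiag (\<lambda>i. e) ** adj V = cscale (complex_of_real e) (mat 1)" .
  then show ?thesis using A diag_add[of V d "\<lambda>i. e"] by simp
qed

lemma psd_shift:
  assumes p: "psd B" and e: "e \<ge> 0"
  shows "psd (B + cscale (complex_of_real e) (mat 1))"
proof -
  have "hermitian (cscale (complex_of_real e) (mat 1) :: complex^'a^'a)"
    by (simp add: hermitian_def adj_cscale)
  moreover have "0 \<le> Re (cinner x ((B + cscale (complex_of_real e) (mat 1)) *v x))" for x
    using p e unfolding form_shift by (simp add: psd_iff)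
  ultimately show ?thesis using p by (simp add: psd_iff herm_add)
qed

lemma Qexp:
  "cinner (u + c *s v) (A *v (u + c *s v)) =
    cinner u (A *v u) + c * cinner u (A *v v) + cnj c * cinner v (A *v u) + cnj c * c * cinner v (A *v v)"
proof -
  have "A *v (u + c *s v) = A *v u + c *s (A *v v)"
    by (simp only: matrix_vector_right_distrib mv_scale)
  then show ?thesis
    by (simp only: cinner_add_left cinner_add_right cinner_scale_left cinner_scale_right)
       (simp add: algebra_simps)
qed

lemma polar:
  fixes A :: "complex^'n^'n"
  defines "Q \<equiv> \<lambda>z. cinner z (A *v z)"
  shows "cinner u (A *v v) = (1/4) * ((Q (u + 1 *s v) - Q (u + (-1) *s v))
      - \<i> * (Q (u + \<i> *s v) - Q (u + (-\<i>) *s v)))"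
  unfolding Q_def Qexp by (simp add: algebra_simps)

lemma entry_cinner: "cinner (axis i 1) ((A::complex^'n^'n) *v axis j 1) = A $ i $ j"
proof -
  have "cinner (axis i 1) (A *v axis j 1) = (\<Sum>k\<in>UNIV. if k = i then A $ i $ j else 0)"
    unfolding cinner_def mv_axis by (rule sum.cong) (auto simp: axis_def)
  then show ?thesis by simp
qed

lemma gmean_le:
  fixes A B X :: "complex^'n^'n"
  assumes pA: "psd A" and pB: "psd B" and hX: "hermitian X"
    and form: "\<And>x y. 0 \<le> Re (cinner x (A *v x)) + Re (cinner y (B *v y)) + 2 * Re (cinner y (X *v x))"
  shows "loewner_le X (gmean A B)"
proof -
  obtain V d where V: "unitary V" and Ad: "A = V ** rdiag d ** adj V"
    using spectral pA psd_iff by blast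
  have d0: "d i \<ge> 0" for i using pA Ad psd_diag_iff[OF V] by simp
  define Ae where "Ae e = A + cscale (complex_of_real e) (mat 1)" for e
  define Be where "Be e = B + cscale (complex_of_real e) (mat 1)" for e
  define M where "M e = gmean_pd (Ae e) (Be e)" for e
  have Aed: "Ae e = V ** rdiag (\<lambda>i. d i + e) ** adj V" for e
    unfolding Ae_def by (rule shift_diag[OF V Ad])
  have pos: "\<forall>i. d i + e > 0" if "e > 0" for e using d0 that by (simp add: add_nonneg_pos)
  have pBe: "psd (Be e)" if "e \<ge> 0" for e unfolding Be_def by (rule psd_shift[OF pB that])
  have XM: "loewner_le X (M e)" if e: "e > 0" for e
    unfolding M_def
  proof (rule gm_le[OF V Aed pos[OF e] pBe hX])
    show "e \<ge> 0" using e by simp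
    fix x y
    have "0 \<le> Re (cinner x (A *v x)) + Re (cinner y (B *v y)) + 2 * Re (cinner y (X *v x))" by (rule form)
    moreover have "0 \<le> e * (norm x)^2" "0 \<le> e * (norm y)^2" using e by simp_all
    ultimately show "0 \<le> Re (cinner x (Ae e *v x)) + Re (cinner y (Be e *v y)) + 2 * Re (cinner y (X *v x))"
      unfolding Ae_def Be_def form_shift by linarith
  qed
  have pM: "psd (M e)" if e: "e > 0" for e
    unfolding M_def by (rule gm_props(1)[OF V Aed pos[OF e] pBe]) (use e in simp)
  have mono: "loewner_le (M e) (M e')" if e: "e > 0" and ee: "e \<le> e'" for e e'
  proof -
    have e': "e' > 0" using e ee by simp
    show ?thesis unfolding M_def[of e']
    proof (rule gm_le[OF V Aed pos[OF e'] pBe])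
      show "e' \<ge> 0" using e' by simp
      show "hermitian (M e)" using pM[OF e] by (simp add: psd_iff)
      fix x y
      have "0 \<le> Re (cinner x (Ae e *v x)) + Re (cinner y (Be e *v y)) + 2 * Re (cinner y (M e *v x))"
        unfolding M_def by (rule gm_props(2)[OF V Aed pos[OF e] pBe]) (use e in simp)
      moreover have "e * (norm x)^2 \<le> e' * (norm x)^2" "e * (norm y)^2 \<le> e' * (norm y)^2"
        using ee by (simp_all add: mult_right_mono)
      ultimately show "0 \<le> Re (cinner x (Ae e' *v x)) + Re (cinner y (Be e' *v y)) + 2 * Re (cinner y (M e *v x))"
        unfolding Ae_def Be_def form_shift by linarith
    qed
  qed
  define phi where "phi x e = Re (cinner x (M e *v x))" for x e
  have phimono: "phi x e \<le> phi x e'" if "e > 0" "e \<le> e'" for x e e'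
  proof -
    have "psd (M e' - M e)" using mono[OF that] by (simp add: loewner_le_def)
    then have "0 \<le> Re (cinner x ((M e' - M e) *v x))" by (simp add: psd_iff)
    then show ?thesis by (simp add: phi_def matrix_vector_mult_diff_rdistrib cinner_diff_right)
  qed
  have phi0: "0 \<le> phi x e" if "e > 0" for x e
    using pM[OF that] by (simp add: phi_def psd_iff)
  have phiconv: "\<exists>l. (phi x \<longlongrightarrow> l) (at_right 0)" for x
  proof -
    have "(phi x \<longlongrightarrow> Inf (phi x ` ({0<..} \<inter> UNIV))) (at 0 within ({0<..} \<inter> UNIV))"
      by (rule Lim_right_bound[of UNIV 0 "phi x" 0]) (auto intro: phimono phi0)
    then show ?thesis by auto
  qed
  have Qconv: "\<exists>l. ((\<lambda>e. cinner x (M e *v x)) \<longlongrightarrow> l) (at_right 0)" for x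
  proof -
    obtain l where l: "(phi x \<longlongrightarrow> l) (at_right 0)" using phiconv by blast
    have ev: "eventually (\<lambda>e. complex_of_real (phi x e) = cinner x (M e *v x)) (at_right 0)"
    proof (rule eventually_mono[OF eventually_at_right_less])
      fix e :: real assume "0 < e"
      then have "hermitian (M e)" using pM by (simp add: psd_iff)
      then show "complex_of_real (phi x e) = cinner x (M e *v x)"
        unfolding phi_def by (rule herm_real[symmetric])
    qed
    have "((\<lambda>e. complex_of_real (phi x e)) \<longlongrightarrow> complex_of_real l) (at_right 0)"
      by (rule tendsto_of_real[OF l])
    then show ?thesis using tendsto_cong[OF ev] by blast
  qed
  have entry: "\<exists>l. ((\<lambda>e. M e $ i $ j) \<longlongrightarrow> l) (at_right 0)" for i j
  proof -
    define u :: "complex^'n" where "u = axis i 1"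
    define v :: "complex^'n" where "v = axis j 1"
    define Qf where "Qf z e = cinner z (M e *v z)" for z e
    obtain l1 where l1: "(Qf (u + 1 *s v) \<longlongrightarrow> l1) (at_right 0)"
      using Qconv unfolding Qf_def by blast
    obtain l2 where l2: "(Qf (u + (-1) *s v) \<longlongrightarrow> l2) (at_right 0)"
      using Qconv unfolding Qf_def by blast
    obtain l3 where l3: "(Qf (u + \<i> *s v) \<longlongrightarrow> l3) (at_right 0)"
      using Qconv unfolding Qf_def by blast
    obtain l4 where l4: "(Qf (u + (-\<i>) *s v) \<longlongrightarrow> l4) (at_right 0)"
      using Qconv unfolding Qf_def by blast
    define fx where "fx e = (1/4) * ((Qf (u + 1 *s v) e - Qf (u + (-1) *s v) e)
      - \<i> * (Qf (u + \<i> *s v) e - Qf (u + (-\<i>) *s v) e))" for e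
    have t: "(fx \<longlongrightarrow> (1/4) * ((l1 - l2) - \<i> * (l3 - l4))) (at_right 0)"
      unfolding fx_def by (intro tendsto_intros l1 l2 l3 l4)
    have "M e $ i $ j = fx e" for e
      unfolding fx_def u_def v_def Qf_def entry_cinner[symmetric] by (rule polar)
    then have "(\<lambda>e. M e $ i $ j) = fx" by (rule ext)
    then show ?thesis using t by auto
  qed
  then have "\<forall>i j. \<exists>l. ((\<lambda>e. M e $ i $ j) \<longlongrightarrow> l) (at_right 0)" by blast
  then obtain lf where lf: "\<And>i j. ((\<lambda>e. M e $ i $ j) \<longlongrightarrow> lf i j) (at_right 0)" by metis
  define L :: "complex^'n^'n" where "L = (\<chi> i j. lf i j)"
  have MLt: "(M \<longlongrightarrow> L) (at_right 0)"
  proof (rule vec_tendstoI)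
    fix i
    show "((\<lambda>e. M e $ i) \<longlongrightarrow> L $ i) (at_right 0)"
      by (rule vec_tendstoI) (simp add: L_def lf)
  qed
  have Lij: "((\<lambda>e. M e $ i $ j) \<longlongrightarrow> L $ i $ j) (at_right 0)" for i j
    unfolding L_def vec_lambda_beta by (rule lf)
  have gL: "gmean A B = L"
    unfolding gmean_def Ae_def[symmetric] Be_def[symmetric] M_def[symmetric]
    by (rule tendsto_Lim[OF trivial_limit_at_right_real MLt])
  have hL: "hermitian L"
  proof -
    have Lh: "L $ i $ j = cnj (L $ j $ i)" for i j
    proof -
      have t1: "((\<lambda>e. M e $ i $ j) \<longlongrightarrow> L $ i $ j) (at_right 0)" by (rule Lij)
      have t2: "((\<lambda>e. cnj (M e $ j $ i)) \<longlongrightarrow> cnj (L $ j $ i)) (at_right 0)"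
        by (intro tendsto_intros Lij)
      have ev: "eventually (\<lambda>e. cnj (M e $ j $ i) = M e $ i $ j) (at_right 0)"
      proof (rule eventually_mono[OF eventually_at_right_less])
        fix e :: real assume "0 < e"
        then have "hermitian (M e)" using pM by (simp add: psd_iff)
        then show "cnj (M e $ j $ i) = M e $ i $ j" unfolding hermitian_def
          by (metis adj_nth)
      qed
      have "((\<lambda>e. M e $ i $ j) \<longlongrightarrow> cnj (L $ j $ i)) (at_right 0)"
        using t2 tendsto_cong[OF ev] by blast
      then show ?thesis using t1 tendsto_unique[OF trivial_limit_at_right_real] by blast
    qed
    show ?thesis unfolding hermitian_def vec_eq_iff adj_nth by (metis Lh)
  qed
  have formL: "Re (cinner x (X *v x)) \<le> Re (cinner x (L *v x))" for x
  proof -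
    have "((\<lambda>e. Re (\<Sum>i\<in>UNIV. \<Sum>j\<in>UNIV. cnj (x $ i) * M e $ i $ j * x $ j))
        \<longlongrightarrow> Re (\<Sum>i\<in>UNIV. \<Sum>j\<in>UNIV. cnj (x $ i) * L $ i $ j * x $ j)) (at_right 0)"
      by (intro tendsto_intros Lij)
    then have t: "(phi x \<longlongrightarrow> Re (cinner x (L *v x))) (at_right 0)"
      unfolding psd_form phi_def .
    have ev: "eventually (\<lambda>e. Re (cinner x (X *v x)) \<le> phi x e) (at_right 0)"
    proof (rule eventually_mono[OF eventually_at_right_less])
      fix e :: real assume "0 < e"
      then have "psd (M e - X)" using XM by (simp add: loewner_le_def)
      then have "0 \<le> Re (cinner x ((M e - X) *v x))" by (simp add: psd_iff)
      then show "Re (cinner x (X *v x)) \<le> phi x e"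
        by (simp add: phi_def matrix_vector_mult_diff_rdistrib cinner_diff_right)
    qed
    show ?thesis by (rule tendsto_lowerbound[OF t ev trivial_limit_at_right_real])
  qed
  have "psd (L - X)"
    unfolding psd_iff
    using hL hX formL by (simp add: herm_diff matrix_vector_mult_diff_rdistrib cinner_diff_right)
  then show ?thesis by (simp add: loewner_le_def gL)
qed




lemma cinner_uminus_left: "cinner (- x) y = - cinner x y"
  by (simp add: cinner_def sum_negf)
lemma mv_uminus: "(- (A::complex^'n^'m)) *v x = - (A *v x)"
  by (simp add: vec_eq_iff matrix_vector_mult_def sum_negf)
lemma mv_uminus_right: "(A::complex^'n^'m) *v (- x) = - (A *v x)"
  by (simp add: vec_eq_iff matrix_vector_mult_def sum_negf)
lemma cinner_uminus_right: "cinner x (- y) = - cinner x y"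
  by (simp add: cinner_def sum_negf)

lemma herm_uminus: "hermitian A \<Longrightarrow> hermitian (- A)"
  by (simp add: hermitian_def adj_uminus)

lemma psd_mabs: "psd (mabs T)"
proof -
  have "psd (adj T ** T)"
    unfolding psd_iff
  proof
    show "hermitian (adj T ** T)" by (simp add: hermitian_def adj_mult)
    show "\<forall>x. 0 \<le> Re (cinner x ((adj T ** T) *v x))"
    proof
      fix x
      have "cinner x ((adj T ** T) *v x) = cinner (T *v x) (T *v x)"
        using cinner_mv[of x "adj T" "T *v x"] by (simp add: matrix_vector_mul_assoc)
      then show "0 \<le> Re (cinner x ((adj T ** T) *v x))" by (simp add: Re_cinner_self)
    qed
  qed
  then show ?thesis unfolding mabs_def by (rule psd_mfun') simp
qed

theorem mainTheorem15:
  fixes T :: "complex^'n^'n" and f g :: "real \<Rightarrow> real"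
  assumes "continuous_on {0..} f" and "continuous_on {0..} g"
    and "\<And>t. t \<ge> 0 \<Longrightarrow> f t \<ge> 0" and "\<And>t. t \<ge> 0 \<Longrightarrow> g t \<ge> 0"
    and "\<And>t. t \<ge> 0 \<Longrightarrow> f t * g t = t"
  defines "F \<equiv> mfun (\<lambda>t. (f t)^2) (mabs T) + mfun (\<lambda>t. (f t)^2) (mabs (adj T))"
    and "G \<equiv> mfun (\<lambda>t. (g t)^2) (mabs T) + mfun (\<lambda>t. (g t)^2) (mabs (adj T))"
    and "X \<equiv> ReM T + ImM T"
  shows "psd (blockM F X X G)
     \<and> loewner_le X (gmean F G) \<and> loewner_le (- X) (gmean F G)
     \<and> loewner_le X (mabs T + mabs (adj T)) \<and> loewner_le (- X) (mabs T + mabs (adj T))"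
proof -
  note bm = block_main[where T=T, OF assms(3,4,5), folded F_def G_def X_def]
  have hF: "hermitian F" and hG: "hermitian G" and hX: "hermitian X" using bm by auto
  have form: "0 \<le> Re (cinner x (F *v x)) + Re (cinner y (G *v y)) + 2 * Re (cinner y (X *v x))" for x y
    using bm by blast
  have P1: "psd (blockM F X X G)" by (rule block_psd[OF hF hG hX form])
  have hmabs: "hermitian (mabs S)" for S :: "complex^'n^'n"
    using psd_mabs psd_iff by blast
  have pF: "psd F" unfolding F_def by (intro psd_add psd_mfun hmabs) simp_all
  have pG: "psd G" unfolding G_def by (intro psd_add psd_mfun hmabs) simp_all
  have P2: "loewner_le X (gmean F G)" by (rule gmean_le[OF pF pG hX form])
  have formm: "0 \<le> Re (cinner x (F *v x)) + Re (cinner y (G *v y)) + 2 * Re (cinner y ((- X) *v x))" for x y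
    using form[of x "- y"]
    by (simp add: mv_uminus cinner_uminus_left cinner_uminus_right mv_uminus_right)
  have P3: "loewner_le (- X) (gmean F G)" by (rule gmean_le[OF pF pG herm_uminus[OF hX] formm])
  define P where "P = mabs T + mabs (adj T)"
  have sq: "mfun (\<lambda>t. (sqrt t)^2) (mabs S) = mabs S" for S :: "complex^'n^'n"
  proof -
    have "mfun (\<lambda>t. (sqrt t)^2) (mabs S) = mfun (\<lambda>t. t) (mabs S)"
      by (rule psd_mfun_cong[OF psd_mabs]) simp
    then show ?thesis by (simp add: mfun_id[OF hmabs])
  qed
  have s1: "\<And>t. t \<ge> 0 \<Longrightarrow> sqrt t \<ge> 0" by simp
  have s2: "\<And>t. t \<ge> 0 \<Longrightarrow> sqrt t * sqrt t = t" by simp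
  note bm2 = block_main[where T=T and f=sqrt and g=sqrt, OF s1 s1 s2]
  have form2: "0 \<le> Re (cinner x (P *v x)) + Re (cinner y (P *v y)) + 2 * Re (cinner y (X *v x))" for x y
    using bm2(4)[of x y] unfolding sq P_def X_def by simp
  have hP: "hermitian P" unfolding P_def by (intro herm_add hmabs)
  have P4: "loewner_le X P"
    unfolding loewner_le_def psd_iff
  proof
    show "hermitian (P - X)" by (rule herm_diff[OF hP hX])
    show "\<forall>x. 0 \<le> Re (cinner x ((P - X) *v x))"
    proof
      fix x
      have "0 \<le> Re (cinner x (P *v x)) + Re (cinner (- x) (P *v (- x))) + 2 * Re (cinner (- x) (X *v x))"
        by (rule form2)
      then show "0 \<le> Re (cinner x ((P - X) *v x))"
        by (simp add: matrix_vector_mult_diff_rdistrib cinner_diff_right mv_uminus_right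
            cinner_uminus_left cinner_uminus_right)
    qed
  qed
  have P5: "loewner_le (- X) P"
    unfolding loewner_le_def psd_iff
  proof
    show "hermitian (P - - X)" using herm_add[OF hP hX] by simp
    show "\<forall>x. 0 \<le> Re (cinner x ((P - - X) *v x))"
    proof
      fix x
      have "0 \<le> Re (cinner x (P *v x)) + Re (cinner x (P *v x)) + 2 * Re (cinner x (X *v x))"
        by (rule form2)
      then show "0 \<le> Re (cinner x ((P - - X) *v x))"
        by (simp add: matrix_vector_mult_add_rdistrib cinner_add_right)
    qed
  qed
  show ?thesis using P1 P2 P3 P4 P5 by (simp add: P_def)
qed


end
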